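(* Assume Assumption R and Assumption H with H5 holding for $l=0$. Let $\beta_n:=\beta_0+n^{-1/2}\delta_n$ for a (possibly random) $\delta_n=o_p(n^{1/2})$, and $\Delta^k_n(\beta):=n^{1/2}[\bar\theta^k_n(\beta,\lambda_n)-\bar\theta^k_n(\beta_0,\lambda_n)]$. Then (i) $\sup_{\beta\in B}\|\bar\theta^k_n(\beta,\lambda_n)-\theta^k(\beta,\lambda_n)\|\to_p0$; (ii) $\theta^k(\beta_0,\lambda_n)-\theta(\beta_0,0)=O_p(\lambda_n^{k+1})$; (iii) $\Delta^k_n(\beta_n)=G\delta_n+o_p(1+\|\delta_n\|)$.
   Context: Setting. Observed data $(y_i,x_i)$, $i=1,\dots,n$, are i.i.d. Fix an integer $M\ge1$. For $m\in\{1,\dots,M\}$ simulated unobservables $\eta_i^m$ are drawn (i.i.d. over $i,m$, independent of the $x_i$); write $z_i^m=(x_i,\eta_i^m)$, and $z_i^0=(x_i,\eta_i^0)$ where $\eta_i^0$ are the true (unobserved) unobservables. $B\subset\mathbb R^{d_\beta}$ is compact and $\Lambda=[0,1]$. For $(\beta,\lambda)\in B\times\Lambda$ the structural model delivers smoothed outcomes $y(z;\beta,\lambda)$ ($\lambda=0$ = unsmoothed outcomes); write $y_i^m(\beta,\lambda)=y(z_i^m;\beta,\lambda)$. Auxiliary model: a function $\ell(y,x;\theta)$, $\theta\in\Theta\subset\mathbb R^{d_\theta}$; $\mathcal L_n(\tilde y,x;\theta)=n^{-1}\sum_{i=1}^n\ell(\tilde y_i,x_i;\theta)$; $\mathcal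 L_n(\theta):=\mathcal L_n(y,x;\theta)$ (observed data), $\mathcal L(\theta):=\mathbb E\mathcal L_n(\theta)$; dots denote gradient/Hessian in $\theta$. $\hat\theta_n:=\arg\max_\theta\mathcal L_n(\theta)$; $\hat\theta^m_n(\beta,\lambda):=\arg\max_\theta\mathcal L_n(y^m(\beta,\lambda),x;\theta)$ for $m\ge1$, and by convention $\hat\theta^0_n(\beta,\lambda):=\hat\theta_n$. $\bar\theta_n(\beta,\lambda):=M^{-1}\sum_{m=1}^M\hat\theta^m_n(\beta,\lambda)$. $\theta(\beta,\lambda)$ is a deterministic function on $B\times\Lambda$ (the binding function). $\ell^m_i(\beta,\lambda;\theta):=\ell(y_i^m(\beta,\lambda),x_i;\theta)$ for $m\ge1$ and $\ell^0_i(\beta,\lambda;\theta):=\ell(y_i,x_i;\theta)$. Jackknifing: fix $\delta\in(0,1)$ and an order $k\ge0$, with weights $\gamma_{0k},\dots,\gamma_{kk}$ summing to $1$ such that $\theta^k(\beta,\lambda):=\sum_{r=0}^k\gamma_{rk}\theta(\beta,\delta^r\lambda)=\theta(\beta,0)+O(\lambda^{k+1})$ as $\lambda\to0$; $\bar\theta^k_n(\beta,\lambda):=\sum_{r=0}^k\gamma_{rk}\bar\theta_n(\beta,\delta^r\lambda)$. Assumption R: (R1) $y_i=y(z_i^0;\beta_0,0)$ for some $\beta_0\in\operatorname{int}B$; (R2) $\theta_0:=\theta(\beta_0,0)\in\operatorname{int}\Theta$; (R3) $\theta(\beta,\lambda)$ is single-valued and $(k_0+1)$-times differentiable in $\beta$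 on $(\operatorname{int}B)\times\Lambda$; (R4) $\beta\mapsto\theta(\beta,0)$ is injective; (R5) $\lambda_n\in\Lambda$ is measurable w.r.t. a $\sigma$-field $\mathcal F$ supporting all observed and simulated variables, and $\lambda_n\to_p0$; (R6) $k\in\{0,\dots,k_0\}$ and $n^{1/2}\lambda_n^{k+1}=o_p(1)$; (R8) $W_n\to_pW$, $W$ positive definite. Assumption H: (H1) $\mathcal L_n$ is twice continuously differentiable on $\operatorname{int}\Theta$; (H2) for $l\in\{0,1,2\}$, $\partial^l_\theta\mathcal L_n(\theta)\to_p\partial^l_\theta\mathcal L(\theta)$, and $n^{-1}\sum_i\dot\ell^{m_1}_i(\beta_1,\lambda_1;\theta_1)\dot\ell^{m_2}_i(\beta_2,\lambda_2;\theta_2)^\top\to_p\mathbb E[\dot\ell^{m_1}_i(\beta_1,\lambda_1;\theta_1)\dot\ell^{m_2}_i(\beta_2,\lambda_2;\theta_2)^\top]$, uniformly over $(\beta_j,\lambda_j)\in B\times\Lambda$ and $\theta_j$ in compact subsets of $\operatorname{int}\Theta$, for all $m_1,m_2\in\{0,\dots,M\}$; (H3) $\psi^m_n(\beta,\lambda):=n^{1/2}[\hat\theta^m_n(\beta,\lambda)-\theta(\beta,\lambda)]\rightsquigarrow\psi^m(\beta,\lambda)$ in $\ell^\infty(B\times\Lambda)$ jointly in $m\in\{0,\dots,M\}$, each $\psi^m$ a mean-zero continuous Gaussian process (for $m=0$, $\psi^0_n=n^{1/2}(\hat\theta_n-\theta_0)$); (H4) for any random $\beta_n=\beta_0+o_p(1)$,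 $\psi^m_n(\beta_n,\lambda_n)=-H^{-1}\phi^m_n+o_p(1)$ where $\phi^m_n:=n^{-1/2}\sum_{i=1}^n\dot\ell^m_i(\beta_0,0;\theta_0)$, $H:=\mathbb E\ddot{\mathcal L}_n(\theta_0)=\ddot{\mathcal L}(\theta_0)$ is nonsingular, and $(\phi^m_n)_{m=0}^M\rightsquigarrow(\phi^m)_{m=0}^M$ jointly Gaussian with $\Sigma:=\mathbb E\phi^m\phi^{m\top}=\mathbb E\phi^m_n\phi^{m\top}_n$ and $R:=\mathbb E\phi^{m_1}\phi^{m_2\top}=\mathbb E\phi^{m_1}_n\phi^{m_2\top}_n$ for $m_1\ne m_2$; (H5, with index $l$) $\sup_{\beta\in B}\|\partial^l_\beta\hat\theta^m_n(\beta,\lambda_n)-\partial^l_\beta\theta(\beta,0)\|=o_p(1)$ for each $m\in\{1,\dots,M\}$. Notation: $G$ is the $d_\theta\times d_\beta$ Jacobian of $\beta\mapsto\theta(\beta,0)$ at $\beta_0$. *)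

theory Defs
  imports "HOL-Probability.Probability"
begin

section \<open>Stochastic order notation (via outer probability, to cover non-measurable sups)\<close>

definition outer_prob :: "'w measure \<Rightarrow> 'w set \<Rightarrow> real" where
  "outer_prob P A = (INF S \<in> {S \<in> sets P. A \<inter> space P \<subseteq> S}. measure P S)"

definition outer_exp :: "'w measure \<Rightarrow> ('w \<Rightarrow> real) \<Rightarrow> real" where
  "outer_exp P f = (INF g \<in> {g \<in> borel_measurable P. integrable P g \<and> (\<forall>\<omega>\<in>space P. f \<omega> \<le> g \<omega>)}.
                       integral\<^sup>L P g)"

definition small_op :: "'w measure \<Rightarrow> (nat \<Rightarrow> 'w \<Rightarrow> 'a::real_normed_vector) \<Rightarrow> (nat \<Rightarrow> 'w \<Rightarrow> real) \<Rightarrow> bool" where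
  "small_op P X r \<longleftrightarrow>
     (\<forall>\<epsilon>>0. (\<lambda>n. outer_prob P {\<omega> \<in> space P. norm (X n \<omega>) > \<epsilon> * r n \<omega>}) \<longlonglongrightarrow> 0)"

definition big_Op :: "'w measure \<Rightarrow> (nat \<Rightarrow> 'w \<Rightarrow> 'a::real_normed_vector) \<Rightarrow> (nat \<Rightarrow> 'w \<Rightarrow> real) \<Rightarrow> bool" where
  "big_Op P X r \<longleftrightarrow>
     (\<forall>\<epsilon>>0. \<exists>K N. \<forall>n\<ge>N. outer_prob P {\<omega> \<in> space P. norm (X n \<omega>) > K * r n \<omega>} < \<epsilon>)"

definition op_unif :: "'w measure \<Rightarrow> 'i set \<Rightarrow> (nat \<Rightarrow> 'i \<Rightarrow> 'w \<Rightarrow> 'a::real_normed_vector) \<Rightarrow> bool" where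
  "op_unif P S X \<longleftrightarrow>
     (\<forall>\<epsilon>>0. (\<lambda>n. outer_prob P {\<omega> \<in> space P. \<exists>s\<in>S. norm (X n s \<omega>) > \<epsilon>}) \<longlonglongrightarrow> 0)"

text \<open>independence of two random elements with possibly different value types
  (the library's indep_var, as characterised by lemma indep_var_eq, without the same-type restriction)\<close>
definition indep_rv :: "'w measure \<Rightarrow> 'a measure \<Rightarrow> ('w \<Rightarrow> 'a) \<Rightarrow> 'b measure \<Rightarrow> ('w \<Rightarrow> 'b) \<Rightarrow> bool" where
  "indep_rv P S X T Y \<longleftrightarrow> X \<in> measurable P S \<and> Y \<in> measurable P T \<and>
     prob_space.indep_set P
       (sigma_sets (space P) {X -` A \<inter> space P | A. A \<in> sets S})
       (sigma_sets (space P) {Y -` A \<inter> space P | A. A \<in> sets T})"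

definition bdd_cont_on :: "'f set \<Rightarrow> ('f \<Rightarrow> 'f \<Rightarrow> real) \<Rightarrow> ('f \<Rightarrow> real) \<Rightarrow> bool" where
  "bdd_cont_on D d h \<longleftrightarrow> (\<exists>C. \<forall>F\<in>D. \<bar>h F\<bar> \<le> C) \<and>
     (\<forall>F\<in>D. \<forall>\<epsilon>>0. \<exists>\<delta>>0. \<forall>G\<in>D. d F G < \<delta> \<longrightarrow> \<bar>h F - h G\<bar> < \<epsilon>)"

definition weak_conv :: "'w measure \<Rightarrow> (nat \<Rightarrow> 'w \<Rightarrow> 'f) \<Rightarrow> 'v measure \<Rightarrow> ('v \<Rightarrow> 'f)
    \<Rightarrow> 'f set \<Rightarrow> ('f \<Rightarrow> 'f \<Rightarrow> real) \<Rightarrow> bool" where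
  "weak_conv P Xn Q X D d \<longleftrightarrow> (\<forall>n. \<forall>\<omega>\<in>space P. Xn n \<omega> \<in> D) \<and> (\<forall>v\<in>space Q. X v \<in> D) \<and>
     (\<forall>h. bdd_cont_on D d h \<longrightarrow>
        (\<lambda>n. outer_exp P (\<lambda>\<omega>. h (Xn n \<omega>))) \<longlonglongrightarrow> outer_exp Q (\<lambda>v. h (X v)))"

text \<open>Space (ell^infty(S))^(M+1) of (M+1)-tuples of bounded paths, with the sup distance\<close>
definition bdd_paths :: "nat \<Rightarrow> 'i set \<Rightarrow> (nat \<Rightarrow> 'i \<Rightarrow> 'a::real_normed_vector) set" where
  "bdd_paths M S = {F. \<forall>m\<le>M. bounded (F m ` S)}"

definition sup_dist :: "nat \<Rightarrow> 'i set \<Rightarrow> (nat \<Rightarrow> 'i \<Rightarrow> 'a::real_normed_vector) \<Rightarrow> (nat \<Rightarrow> 'i \<Rightarrow> 'a) \<Rightarrow> real" where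
  "sup_dist M S F G = (SUP ms \<in> {..M} \<times> S. norm (F (fst ms) (snd ms) - G (fst ms) (snd ms)))"

definition max_dist :: "nat \<Rightarrow> (nat \<Rightarrow> 'a::real_normed_vector) \<Rightarrow> (nat \<Rightarrow> 'a) \<Rightarrow> real" where
  "max_dist M F G = Max ((\<lambda>m. norm (F m - G m)) ` {..M})"

definition gaussian_rv :: "'v measure \<Rightarrow> ('v \<Rightarrow> real) \<Rightarrow> bool" where
  "gaussian_rv Q X \<longleftrightarrow> X \<in> borel_measurable Q \<and>
     ((\<exists>\<mu> \<sigma>. \<sigma> > 0 \<and> distributed Q lborel X (normal_density \<mu> \<sigma>)) \<or> (\<exists>c. AE v in Q. X v = c))"

definition mean0_cont_gaussian_process ::
    "'v measure \<Rightarrow> 'i::topological_space set \<Rightarrow> ('i \<Rightarrow> 'v \<Rightarrow> real^'p) \<Rightarrow> bool" where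
  "mean0_cont_gaussian_process Q S Z \<longleftrightarrow>
     (\<forall>S' c. finite S' \<and> S' \<subseteq> S \<longrightarrow> gaussian_rv Q (\<lambda>v. \<Sum>s\<in>S'. c s \<bullet> Z s v)) \<and>
     (\<forall>s\<in>S. \<forall>j. integral\<^sup>L Q (\<lambda>v. Z s v $ j) = 0) \<and>
     (\<forall>v\<in>space Q. continuous_on S (\<lambda>s. Z s v))"

definition grad :: "(real^'p \<Rightarrow> real) \<Rightarrow> real^'p \<Rightarrow> real^'p" where
  "grad f t = (\<chi> j. frechet_derivative f (at t) (axis j 1))"

definition hess :: "(real^'p \<Rightarrow> real) \<Rightarrow> real^'p \<Rightarrow> real^'p^'p" where
  "hess f t = (\<chi> j. grad (\<lambda>s. grad f s $ j) t)"

definition C2_on :: "(real^'p) set \<Rightarrow> (real^'p \<Rightarrow> real) \<Rightarrow> bool" where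
  "C2_on U f \<longleftrightarrow> (\<forall>t\<in>U. f differentiable (at t)) \<and>
     (\<forall>j. \<forall>t\<in>U. (\<lambda>s. grad f s $ j) differentiable (at t)) \<and> continuous_on U (hess f)"

fun diff_k :: "nat \<Rightarrow> ('a::real_normed_vector) set \<Rightarrow> ('a \<Rightarrow> 'c::real_normed_vector) \<Rightarrow> bool" where
  "diff_k 0 U f = True"
| "diff_k (Suc k) U f \<longleftrightarrow> (\<forall>b\<in>U. f differentiable (at b)) \<and>
     (\<forall>v. diff_k k U (\<lambda>b. frechet_derivative f (at b) v))"

definition outerp :: "real^'p \<Rightarrow> real^'p \<Rightarrow> real^'p^'p" where
  "outerp u v = (\<chi> a b. u $ a * v $ b)"

definition ell_i :: "('y \<Rightarrow> 'x \<Rightarrow> real^'p \<Rightarrow> real) \<Rightarrow> ('x \<times> 'e \<Rightarrow> real^'b \<Rightarrow> real \<Rightarrow> 'y)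
    \<Rightarrow> (nat \<Rightarrow> 'w \<Rightarrow> 'y) \<Rightarrow> (nat \<Rightarrow> 'w \<Rightarrow> 'x) \<Rightarrow> (nat \<Rightarrow> nat \<Rightarrow> 'w \<Rightarrow> 'e)
    \<Rightarrow> nat \<Rightarrow> nat \<Rightarrow> real^'b \<Rightarrow> real \<Rightarrow> real^'p \<Rightarrow> 'w \<Rightarrow> real" where
  "ell_i ell ystr yobs x eta m i b l t \<omega> =
     (if m = 0 then ell (yobs i \<omega>) (x i \<omega>) t else ell (ystr (x i \<omega>, eta m i \<omega>) b l) (x i \<omega>) t)"

text \<open>L_n(y^m(beta,lambda),x;theta), observations indexed i = 0..n-1\<close>
definition Ln :: "('y \<Rightarrow> 'x \<Rightarrow> real^'p \<Rightarrow> real) \<Rightarrow> ('x \<times> 'e \<Rightarrow> real^'b \<Rightarrow> real \<Rightarrow> 'y)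
    \<Rightarrow> (nat \<Rightarrow> 'w \<Rightarrow> 'y) \<Rightarrow> (nat \<Rightarrow> 'w \<Rightarrow> 'x) \<Rightarrow> (nat \<Rightarrow> nat \<Rightarrow> 'w \<Rightarrow> 'e)
    \<Rightarrow> nat \<Rightarrow> nat \<Rightarrow> real^'b \<Rightarrow> real \<Rightarrow> real^'p \<Rightarrow> 'w \<Rightarrow> real" where
  "Ln ell ystr yobs x eta m n b l t \<omega> = (\<Sum>i<n. ell_i ell ystr yobs x eta m i b l t \<omega>) / real n"

definition thetabar :: "nat \<Rightarrow> (nat \<Rightarrow> nat \<Rightarrow> real^'b \<Rightarrow> real \<Rightarrow> 'w \<Rightarrow> real^'p)
    \<Rightarrow> nat \<Rightarrow> real^'b \<Rightarrow> real \<Rightarrow> 'w \<Rightarrow> real^'p" where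
  "thetabar M thetahat n b l \<omega> = (1 / real M) *\<^sub>R (\<Sum>m\<in>{1..M}. thetahat m n b l \<omega>)"

definition thetabar_k :: "nat \<Rightarrow> (nat \<Rightarrow> nat \<Rightarrow> real^'b \<Rightarrow> real \<Rightarrow> 'w \<Rightarrow> real^'p)
    \<Rightarrow> nat \<Rightarrow> (nat \<Rightarrow> real) \<Rightarrow> real \<Rightarrow> nat \<Rightarrow> real^'b \<Rightarrow> real \<Rightarrow> 'w \<Rightarrow> real^'p" where
  "thetabar_k M thetahat k gam dl n b l \<omega> = (\<Sum>r\<le>k. gam r *\<^sub>R thetabar M thetahat n b (dl ^ r * l) \<omega>)"

definition theta_k :: "(real^'b \<Rightarrow> real \<Rightarrow> real^'p) \<Rightarrow> nat \<Rightarrow> (nat \<Rightarrow> real) \<Rightarrow> real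
    \<Rightarrow> real^'b \<Rightarrow> real \<Rightarrow> real^'p" where
  "theta_k theta k gam dl b l = (\<Sum>r\<le>k. gam r *\<^sub>R theta b (dl ^ r * l))"

end

theory Submission
  imports Defs
begin

lemma op_cover_ne: "{S \<in> sets P. A \<inter> space P \<subseteq> S} \<noteq> {}"
  by (rule ccontr) (auto intro: sets.top)

lemma op_bdd: "bdd_below ((\<lambda>S. measure P S) ` {S \<in> sets P. A \<inter> space P \<subseteq> S})"
  by (rule bdd_belowI[of _ 0]) auto

lemma op_nonneg: "0 \<le> outer_prob P A"
  unfolding outer_prob_def using op_cover_ne[of P A]
  by (intro cINF_greatest) auto

lemma op_le_measure: "S \<in> sets P \<Longrightarrow> A \<inter> space P \<subseteq> S \<Longrightarrow> outer_prob P A \<le> measure P S"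
  unfolding outer_prob_def by (rule cINF_lower[OF op_bdd]) auto

lemma op_mono: assumes "A \<subseteq> A'" shows "outer_prob P A \<le> outer_prob P A'"
  unfolding outer_prob_def
proof (rule cINF_greatest[OF op_cover_ne])
  fix S assume "S \<in> {S \<in> sets P. A' \<inter> space P \<subseteq> S}"
  then show "(INF S\<in>{S \<in> sets P. A \<inter> space P \<subseteq> S}. measure P S) \<le> measure P S"
    using assms by (intro cINF_lower[OF op_bdd]) auto
qed

lemma op_approx: assumes "e > 0" obtains S where "S \<in> sets P" "A \<inter> space P \<subseteq> S"
  "measure P S < outer_prob P A + e"
proof -
  have "outer_prob P A < outer_prob P A + e" using assms by simp
  then have "(INF S\<in>{S \<in> sets P. A \<inter> space P \<subseteq> S}. measure P S) < outer_prob P A + e"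
    unfolding outer_prob_def by simp
  then obtain S where "S \<in> {S \<in> sets P. A \<inter> space P \<subseteq> S}" "measure P S < outer_prob P A + e"
    unfolding cINF_less_iff[OF op_cover_ne op_bdd] by (elim bexE) simp
  then show ?thesis using that by auto
qed

lemma op_union:
  shows "outer_prob P (A \<union> A') \<le> outer_prob P A + outer_prob P A'"
proof (rule field_le_epsilon)
  fix e :: real assume e: "e > 0"
  obtain S where S: "S \<in> sets P" "A \<inter> space P \<subseteq> S" "measure P S < outer_prob P A + e/2"
    using op_approx[of "e/2" P A] e by auto
  obtain S' where S': "S' \<in> sets P" "A' \<inter> space P \<subseteq> S'" "measure P S' < outer_prob P A' + e/2"
    using op_approx[of "e/2" P A'] e by auto
  have "outer_prob P (A \<union> A') \<le> measure P (S \<union> S')"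
    using S S' by (intro op_le_measure) auto
  also have "\<dots> \<le> measure P S + measure P S'"
    using S S' by (intro measure_Un_le) auto
  finally show "outer_prob P (A \<union> A') \<le> outer_prob P A + outer_prob P A' + e"
    using S S' by linarith
qed

lemma oe_le: assumes "g \<in> borel_measurable P" "integrable P g" "\<forall>w\<in>space P. f w \<le> g w"
  "\<forall>w\<in>space P. 0 \<le> f w"
  shows "outer_exp P f \<le> integral\<^sup>L P g"
  unfolding outer_exp_def
proof (rule cINF_lower)
  show "bdd_below (integral\<^sup>L P ` {g \<in> borel_measurable P. integrable P g \<and> (\<forall>\<omega>\<in>space P. f \<omega> \<le> g \<omega>)})"
  proof (rule bdd_belowI[of _ 0])
    fix y assume "y \<in> integral\<^sup>L P ` {g \<in> borel_measurable P. integrable P g \<and> (\<forall>\<omega>\<in>space P. f \<omega> \<le> g \<omega>)}"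
    then obtain g' where g': "\<forall>\<omega>\<in>space P. f \<omega> \<le> g' \<omega>" "y = integral\<^sup>L P g'" by auto
    have "\<forall>\<omega>\<in>space P. 0 \<le> g' \<omega>" using g' assms(4) by force
    then show "0 \<le> y" unfolding g'(2) by (intro integral_nonneg_AE) auto
  qed
qed (use assms in auto)

lemma op_markov: assumes P: "prob_space P" and f: "\<forall>w\<in>space P. 0 \<le> f w \<and> f w \<le> 1"
  and A: "A \<subseteq> {w \<in> space P. 1 \<le> f w}"
  shows "outer_prob P A \<le> outer_exp P f"
  unfolding outer_exp_def
proof (rule cINF_greatest)
  show "{g \<in> borel_measurable P. integrable P g \<and> (\<forall>\<omega>\<in>space P. f \<omega> \<le> g \<omega>)} \<noteq> {}"
  proof -
    have "(\<lambda>_. 1::real) \<in> {g \<in> borel_measurable P. integrable P g \<and> (\<forall>\<omega>\<in>space P. f \<omega> \<le> g \<omega>)}"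
      using f finite_measure.integrable_const[OF prob_space.finite_measure[OF P]] by auto
    then show ?thesis by blast
  qed
next
  fix g assume g: "g \<in> {g \<in> borel_measurable P. integrable P g \<and> (\<forall>\<omega>\<in>space P. f \<omega> \<le> g \<omega>)}"
  have "outer_prob P A \<le> measure P {w\<in>space P. 1 \<le> g w}"
  proof (rule op_le_measure)
    have [measurable]: "g \<in> borel_measurable P" using g by simp
    show "{w \<in> space P. 1 \<le> g w} \<in> sets P" by measurable
    show "A \<inter> space P \<subseteq> {w \<in> space P. 1 \<le> g w}" using A g by force
  qed
  also have "\<dots> \<le> integral\<^sup>L P g / 1"
    proof (intro integral_Markov_inequality_measure[OF _ sets.top])
    have "\<forall>\<omega>\<in>space P. 0 \<le> g \<omega>" using g f by force
    then show "AE x in P. 0 \<le> g x" by auto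
  qed (use g in auto)
  finally show "outer_prob P A \<le> integral\<^sup>L P g" by simp
qed

definition vanish :: "'w measure \<Rightarrow> (nat \<Rightarrow> 'w set) \<Rightarrow> bool" where
  "vanish P E \<longleftrightarrow> (\<forall>\<tau>>0. \<exists>N. \<forall>n\<ge>N. outer_prob P (E n) < \<tau>)"

lemma vanish_lim: "vanish P E \<Longrightarrow> (\<lambda>n. outer_prob P (E n)) \<longlonglongrightarrow> 0"
  unfolding vanish_def
proof (intro LIMSEQ_I)
  fix r :: real assume "\<forall>\<tau>>0. \<exists>N. \<forall>n\<ge>N. outer_prob P (E n) < \<tau>" "0 < r"
  then obtain N where "\<forall>n\<ge>N. outer_prob P (E n) < r" by auto
  then show "\<exists>no. \<forall>n\<ge>no. norm (outer_prob P (E n) - 0) < r"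
    using op_nonneg[of P] by auto
qed

lemma lim_vanish: "(\<lambda>n. outer_prob P (E n)) \<longlonglongrightarrow> 0 \<Longrightarrow> vanish P E"
  unfolding vanish_def
proof (intro allI impI)
  fix \<tau> :: real assume "(\<lambda>n. outer_prob P (E n)) \<longlonglongrightarrow> 0" "\<tau> > 0"
  from LIMSEQ_D[OF this] obtain N where "\<forall>n\<ge>N. norm (outer_prob P (E n) - 0) < \<tau>" by blast
  then show "\<exists>N. \<forall>n\<ge>N. outer_prob P (E n) < \<tau>" by (auto simp: abs_less_iff)
qed

lemma vanish_mono: "vanish P E \<Longrightarrow> (\<And>n. n \<ge> N0 \<Longrightarrow> E' n \<subseteq> E n) \<Longrightarrow> vanish P E'"
  unfolding vanish_def
proof (intro allI impI)
  fix \<tau> :: real assume a: "\<forall>\<tau>>0. \<exists>N. \<forall>n\<ge>N. outer_prob P (E n) < \<tau>" "(\<And>n. n \<ge> N0 \<Longrightarrow> E' n \<subseteq> E n)" "\<tau> > 0"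
  then obtain N where "\<forall>n\<ge>N. outer_prob P (E n) < \<tau>" by auto
  then show "\<exists>N. \<forall>n\<ge>N. outer_prob P (E' n) < \<tau>"
    using a(2) op_mono[of "E' _" "E _" P]
    by (intro exI[of _ "max N N0"]) (meson le_less_trans max.boundedE)
qed

lemma vanish_Un: assumes "vanish P E" "vanish P E'"
  shows "vanish P (\<lambda>n. E n \<union> E' n)"
  unfolding vanish_def
proof (intro allI impI)
  fix \<tau> :: real assume "\<tau> > 0"
  then have "\<tau>/2 > 0" by simp
  then obtain N N' where N: "\<forall>n\<ge>N. outer_prob P (E n) < \<tau>/2" and N': "\<forall>n\<ge>N'. outer_prob P (E' n) < \<tau>/2"
    using assms unfolding vanish_def by meson
  show "\<exists>N. \<forall>n\<ge>N. outer_prob P (E n \<union> E' n) < \<tau>"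
  proof (intro exI allI impI)
    fix n assume "max N N' \<le> n"
    then have "outer_prob P (E n) < \<tau>/2" "outer_prob P (E' n) < \<tau>/2" using N N' by auto
    moreover have "outer_prob P (E n \<union> E' n) \<le> outer_prob P (E n) + outer_prob P (E' n)"
      by (rule op_union)
    ultimately show "outer_prob P (E n \<union> E' n) < \<tau>" by linarith
  qed
qed



lemma minmax_lip: "\<bar>min 1 (max 0 a) - min 1 (max 0 b)\<bar> \<le> \<bar>a - b\<bar>" for a b :: real
  by (auto simp: min_def max_def)

lemma wc_bound:
  fixes Fn :: "nat \<Rightarrow> 'w \<Rightarrow> 'f" and Psi :: "'v \<Rightarrow> 'f" and \<Phi> :: "'f \<Rightarrow> real"
  assumes P: "prob_space P" and wc: "weak_conv P Fn Q Psi D d"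
    and \<Phi>nn: "\<forall>F\<in>D. 0 \<le> \<Phi> F" and Lip: "\<forall>F\<in>D. \<forall>G\<in>D. \<Phi> F - \<Phi> G \<le> L * d F G" and L: "0 \<le> L"
    and dsym: "\<forall>F\<in>D. \<forall>G\<in>D. d F G = d G F"
    and e: "\<epsilon> > 0"
    and g: "g \<in> borel_measurable Q" "integrable Q g" "\<forall>v\<in>space Q. min 1 (\<Phi> (Psi v) / \<epsilon>) \<le> g v"
    and \<tau>: "integral\<^sup>L Q g < \<tau>"
  shows "\<exists>N. \<forall>n\<ge>N. outer_prob P {\<omega>\<in>space P. \<Phi> (Fn n \<omega>) > \<epsilon>} < \<tau>"
proof -
  define h where "h F = min 1 (max 0 (\<Phi> F / \<epsilon>))" for F
  have h01: "0 \<le> h F \<and> h F \<le> 1" for F unfolding h_def by auto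
  have hlip: "\<bar>h F - h G\<bar> \<le> L * d F G / \<epsilon>" if "F \<in> D" "G \<in> D" for F G
  proof -
    have "\<bar>h F - h G\<bar> \<le> \<bar>\<Phi> F / \<epsilon> - \<Phi> G / \<epsilon>\<bar>" unfolding h_def by (rule minmax_lip)
    also have "\<dots> = \<bar>\<Phi> F - \<Phi> G\<bar> / \<epsilon>" using e by (simp add: diff_divide_distrib[symmetric])
    also have "\<dots> \<le> L * d F G / \<epsilon>"
    proof -
      have "\<Phi> F - \<Phi> G \<le> L * d F G" "\<Phi> G - \<Phi> F \<le> L * d G F" using Lip that by auto
      moreover have "d G F = d F G" using dsym that by auto
      ultimately show ?thesis using e by (intro divide_right_mono) auto
    qed
    finally show ?thesis .
  qed
  have bc: "bdd_cont_on D d h"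
    unfolding bdd_cont_on_def
  proof (intro conjI ballI allI impI)
    show "\<exists>C. \<forall>F\<in>D. \<bar>h F\<bar> \<le> C" using h01 by (intro exI[of _ 1]) auto
  next
    fix F e' assume F: "F \<in> D" and e': "(0::real) < e'"
    show "\<exists>\<delta>>0. \<forall>G\<in>D. d F G < \<delta> \<longrightarrow> \<bar>h F - h G\<bar> < e'"
    proof (intro exI[of _ "\<epsilon> * e' / (L + 1)"] conjI ballI impI)
      show "0 < \<epsilon> * e' / (L + 1)" using e e' L by simp
      fix G assume G: "G \<in> D" "d F G < \<epsilon> * e' / (L + 1)"
      have "\<bar>h F - h G\<bar> \<le> L * d F G / \<epsilon>" using hlip F G by auto
      also have "\<dots> \<le> L * (\<epsilon> * e' / (L + 1)) / \<epsilon>"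
        using G L e by (intro divide_right_mono mult_left_mono) auto
      also have "\<dots> = e' * (L / (L + 1))"
      proof -
        have "L * (\<epsilon> * e' / (L + 1)) / \<epsilon> = (\<epsilon> * (L * e' / (L + 1))) / \<epsilon>" by (simp add: algebra_simps)
        also have "\<dots> = L * e' / (L + 1)" using e by simp
        finally show ?thesis by simp
      qed
      also have "\<dots> < e'" using e' L by (simp add: mult_less_cancel_left1 divide_less_eq)
      finally show "\<bar>h F - h G\<bar> < e'" .
    qed
  qed
  have inD: "\<forall>n. \<forall>\<omega>\<in>space P. Fn n \<omega> \<in> D" "\<forall>v\<in>space Q. Psi v \<in> D"
    and conv: "(\<lambda>n. outer_exp P (\<lambda>\<omega>. h (Fn n \<omega>))) \<longlonglongrightarrow> outer_exp Q (\<lambda>v. h (Psi v))"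
    using wc bc unfolding weak_conv_def by auto
  have "outer_exp Q (\<lambda>v. h (Psi v)) \<le> integral\<^sup>L Q g"
  proof (rule oe_le)
    show "\<forall>w\<in>space Q. h (Psi w) \<le> g w"
      using g(3) inD(2) \<Phi>nn e unfolding h_def by (auto simp: max_def)
  qed (use g h01 in auto)
  with \<tau> have "outer_exp Q (\<lambda>v. h (Psi v)) < \<tau>" by simp
  from order_tendstoD(2)[OF conv this] obtain N where N: "\<forall>n\<ge>N. outer_exp P (\<lambda>\<omega>. h (Fn n \<omega>)) < \<tau>"
    unfolding eventually_sequentially by auto
  show ?thesis
  proof (intro exI allI impI)
    fix n assume "N \<le> n"
    have "outer_prob P {\<omega>\<in>space P. \<Phi> (Fn n \<omega>) > \<epsilon>} \<le> outer_exp P (\<lambda>\<omega>. h (Fn n \<omega>))"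
    proof (rule op_markov[OF P])
      show "{\<omega> \<in> space P. \<epsilon> < \<Phi> (Fn n \<omega>)} \<subseteq> {w \<in> space P. 1 \<le> h (Fn n w)}"
        using e by (auto simp: h_def)
    qed (use h01 in auto)
    then show "outer_prob P {\<omega>\<in>space P. \<Phi> (Fn n \<omega>) > \<epsilon>} < \<tau>" using N \<open>N \<le> n\<close> by fastforce
  qed
qed



definition supF :: "nat \<Rightarrow> 'i set \<Rightarrow> (nat \<Rightarrow> 'i \<Rightarrow> 'a::real_normed_vector) \<Rightarrow> real" where
  "supF M S F = (SUP z\<in>{..M}\<times>S. norm (F (fst z) (snd z)))"

definition pairs :: "nat \<Rightarrow> 'i::metric_space set \<Rightarrow> real \<Rightarrow> (nat \<times> 'i \<times> 'i) set" where
  "pairs M S \<eta> = {z. fst z \<le> M \<and> fst (snd z) \<in> S \<and> snd (snd z) \<in> S \<and> dist (fst (snd z)) (snd (snd z)) < \<eta>}"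

definition modF :: "nat \<Rightarrow> 'i::metric_space set \<Rightarrow> real \<Rightarrow> (nat \<Rightarrow> 'i \<Rightarrow> 'a::real_normed_vector) \<Rightarrow> real" where
  "modF M S \<eta> F = (SUP z\<in>pairs M S \<eta>. norm (F (fst z) (fst (snd z)) - F (fst z) (snd (snd z))))"

lemma bdd_paths_bound:
  assumes "F \<in> bdd_paths M S" obtains K where "\<forall>m\<le>M. \<forall>s\<in>S. norm (F m s) \<le> K"
proof -
  have "bounded (\<Union>m\<in>{..M}. F m ` S)"
    using assms unfolding bdd_paths_def by (intro bounded_UN) auto
  then obtain K where "\<forall>x\<in>(\<Union>m\<in>{..M}. F m ` S). norm x \<le> K" unfolding bounded_iff by blast
  then have "\<forall>m\<le>M. \<forall>s\<in>S. norm (F m s) \<le> K" by auto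
  then show ?thesis using that by blast
qed

lemma supF_upper: assumes "F \<in> bdd_paths M S" "m \<le> M" "s \<in> S"
  shows "norm (F m s) \<le> supF M S F"
proof -
  obtain K where K: "\<forall>m\<le>M. \<forall>s\<in>S. norm (F m s) \<le> K" using bdd_paths_bound[OF assms(1)] by blast
  show ?thesis unfolding supF_def
    by (rule cSUP_upper2[where x="(m,s)"]) (use assms K in \<open>auto intro!: bdd_aboveI[of _ K]\<close>)
qed

lemma supF_least: assumes "S \<noteq> {}" "\<forall>m\<le>M. \<forall>s\<in>S. norm (F m s) \<le> c"
  shows "supF M S F \<le> c"
  unfolding supF_def using assms by (intro cSUP_least) auto

lemma pairs_ne: "S \<noteq> {} \<Longrightarrow> \<eta> > 0 \<Longrightarrow> pairs M S \<eta> \<noteq> {}"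
proof -
  assume "S \<noteq> {}" "\<eta> > 0"
  then obtain s where "s \<in> S" by auto
  then have "(0, s, s) \<in> pairs M S \<eta>" using \<open>\<eta> > 0\<close> by (auto simp: pairs_def)
  then show ?thesis by auto
qed

lemma modF_upper: assumes "F \<in> bdd_paths M S" "m \<le> M" "s \<in> S" "t \<in> S" "dist s t < \<eta>"
  shows "norm (F m s - F m t) \<le> modF M S \<eta> F"
proof -
  obtain K where K: "\<forall>m\<le>M. \<forall>s\<in>S. norm (F m s) \<le> K" using bdd_paths_bound[OF assms(1)] by blast
  have "bdd_above ((\<lambda>z. norm (F (fst z) (fst (snd z)) - F (fst z) (snd (snd z)))) ` pairs M S \<eta>)"
  proof (rule bdd_aboveI[of _ "2*K"])
    fix x assume "x \<in> (\<lambda>z. norm (F (fst z) (fst (snd z)) - F (fst z) (snd (snd z)))) ` pairs M S \<eta>"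
    then obtain m s t where "m \<le> M" "s \<in> S" "t \<in> S" "x = norm (F m s - F m t)"
      by (auto simp: pairs_def)
    moreover have "norm (F m s - F m t) \<le> norm (F m s) + norm (F m t)" by (rule norm_triangle_ineq4)
    moreover have "norm (F m s) \<le> K" "norm (F m t) \<le> K" using K calculation by auto
    ultimately show "x \<le> 2 * K" by linarith
  qed
  then show ?thesis unfolding modF_def
    by (rule cSUP_upper2[where x="(m,s,t)"]) (use assms in \<open>auto simp: pairs_def\<close>)
qed

lemma modF_least: assumes "S \<noteq> {}" "\<eta> > 0"
  "\<forall>m\<le>M. \<forall>s\<in>S. \<forall>t\<in>S. dist s t < \<eta> \<longrightarrow> norm (F m s - F m t) \<le> c"
  shows "modF M S \<eta> F \<le> c"
  unfolding modF_def using assms pairs_ne[OF assms(1,2)] by (intro cSUP_least) (auto simp: pairs_def)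

lemma sup_dist_upper: assumes "F \<in> bdd_paths M S" "G \<in> bdd_paths M S" "m \<le> M" "s \<in> S"
  shows "norm (F m s - G m s) \<le> sup_dist M S F G"
proof -
  obtain K where K: "\<forall>m\<le>M. \<forall>s\<in>S. norm (F m s) \<le> K" using bdd_paths_bound[OF assms(1)] by blast
  obtain K' where K': "\<forall>m\<le>M. \<forall>s\<in>S. norm (G m s) \<le> K'" using bdd_paths_bound[OF assms(2)] by blast
  have "bdd_above ((\<lambda>ms. norm (F (fst ms) (snd ms) - G (fst ms) (snd ms))) ` ({..M} \<times> S))"
  proof (rule bdd_aboveI[of _ "K + K'"])
    fix x assume "x \<in> (\<lambda>ms. norm (F (fst ms) (snd ms) - G (fst ms) (snd ms))) ` ({..M} \<times> S)"
    then obtain m s where "m \<le> M" "s \<in> S" "x = norm (F m s - G m s)" by auto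
    moreover have "norm (F m s - G m s) \<le> norm (F m s) + norm (G m s)" by (rule norm_triangle_ineq4)
    ultimately show "x \<le> K + K'" using K K' by fastforce
  qed
  then show ?thesis unfolding sup_dist_def
    by (rule cSUP_upper2[where x="(m,s)"]) (use assms in auto)
qed

lemma sup_dist_sym: "sup_dist M S F G = sup_dist M S G F"
  unfolding sup_dist_def by (simp add: norm_minus_commute)

lemma sup_dist_nonneg: "F \<in> bdd_paths M S \<Longrightarrow> G \<in> bdd_paths M S \<Longrightarrow> S \<noteq> {} \<Longrightarrow> 0 \<le> sup_dist M S F G"
proof -
  assume a: "F \<in> bdd_paths M S" "G \<in> bdd_paths M S" "S \<noteq> {}"
  then obtain s where "s \<in> S" by auto
  then show ?thesis using sup_dist_upper[OF a(1,2), of 0 s] norm_ge_zero[of "F 0 s - G 0 s"] by linarith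
qed

lemma supF_lip: assumes "F \<in> bdd_paths M S" "G \<in> bdd_paths M S" "S \<noteq> {}"
  shows "supF M S F - supF M S G \<le> sup_dist M S F G"
proof -
  have "supF M S F \<le> supF M S G + sup_dist M S F G"
  proof (rule supF_least[OF assms(3)], intro allI impI ballI)
    fix m s assume ms: "m \<le> M" "s \<in> S"
    have "norm (F m s) \<le> norm (G m s) + norm (F m s - G m s)" by (rule norm_triangle_sub)
    then show "norm (F m s) \<le> supF M S G + sup_dist M S F G"
      using supF_upper[OF assms(2) ms] sup_dist_upper[OF assms(1,2) ms] by linarith
  qed
  then show ?thesis by simp
qed

lemma modF_lip: assumes "F \<in> bdd_paths M S" "G \<in> bdd_paths M S" "S \<noteq> {}" "\<eta> > 0"
  shows "modF M S \<eta> F - modF M S \<eta> G \<le> 2 * sup_dist M S F G"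
proof -
  have "modF M S \<eta> F \<le> modF M S \<eta> G + 2 * sup_dist M S F G"
  proof (rule modF_least[OF assms(3,4)], intro allI impI ballI)
    fix m s t assume ms: "m \<le> M" "s \<in> S" "t \<in> S" "dist s t < \<eta>"
    have "norm (F m s - F m t) \<le> norm (G m s - G m t) + norm (F m s - G m s) + norm (F m t - G m t)"
      by (smt (verit) norm_diff_triangle_ineq norm_minus_commute norm_triangle_ineq4
          add_diff_cancel_left' diff_add_eq_diff_diff_swap diff_diff_eq2)
    then show "norm (F m s - F m t) \<le> modF M S \<eta> G + 2 * sup_dist M S F G"
      using modF_upper[OF assms(2) ms] sup_dist_upper[OF assms(1,2) ms(1,2)]
        sup_dist_upper[OF assms(1,2) ms(1,3)] by linarith
  qed
  then show ?thesis by simp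
qed

lemma SUP_dense_le:
  fixes g :: "'a \<Rightarrow> real"
  assumes "Dd \<subseteq> X" "Dd \<noteq> {}" "X \<noteq> {}" "bdd_above (g ` X)" "\<forall>x\<in>X. \<forall>e>0. \<exists>y\<in>Dd. g x \<le> g y + e"
  shows "(SUP x\<in>X. g x) \<le> (SUP y\<in>Dd. g y)"
proof (rule cSUP_least[OF assms(3)])
  fix x assume x: "x \<in> X"
  have bD: "bdd_above (g ` Dd)" using assms(1,4) by (meson bdd_above_mono image_mono)
  show "g x \<le> (SUP y\<in>Dd. g y)"
  proof (rule field_le_epsilon)
    fix e :: real assume "e > 0"
    then obtain y where "y \<in> Dd" "g x \<le> g y + e" using assms(5) x by blast
    then show "g x \<le> (SUP y\<in>Dd. g y) + e" using cSUP_upper[OF \<open>y \<in> Dd\<close> bD] by linarith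
  qed
qed



lemma tri4: "norm (a - b) \<le> norm (a' - b') + norm (a' - a) + norm (b' - b)" for a b a' b' :: "'a::real_normed_vector"
proof -
  have "a - b = (a' - b') + (b' - b) - (a' - a)" by (simp add: algebra_simps)
  then have "norm (a - b) \<le> norm ((a' - b') + (b' - b)) + norm (a' - a)" by (metis norm_triangle_ineq4)
  moreover have "norm ((a' - b') + (b' - b)) \<le> norm (a' - b') + norm (b' - b)" by (rule norm_triangle_ineq)
  ultimately show ?thesis by simp
qed

locale wcs =
  fixes P :: "'w measure" and Q :: "'v measure"
    and Fn :: "nat \<Rightarrow> 'w \<Rightarrow> nat \<Rightarrow> 'i::{metric_space,second_countable_topology} \<Rightarrow> 'a::euclidean_space"
    and Psi :: "'v \<Rightarrow> nat \<Rightarrow> 'i \<Rightarrow> 'a" and M :: nat and S :: "'i set"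
  assumes P: "prob_space P" and Q: "prob_space Q"
    and wc: "weak_conv P Fn Q Psi (bdd_paths M S) (sup_dist M S)"
    and Sne: "S \<noteq> {}" and Scomp: "compact S"
    and cont: "\<forall>m\<le>M. \<forall>v\<in>space Q. continuous_on S (\<lambda>s. Psi v m s)"
    and meas: "\<forall>m\<le>M. \<forall>s\<in>S. (\<lambda>v. Psi v m s) \<in> borel_measurable Q"
begin

lemma inD: "\<forall>n. \<forall>\<omega>\<in>space P. Fn n \<omega> \<in> bdd_paths M S" "\<forall>v\<in>space Q. Psi v \<in> bdd_paths M S"
  using wc unfolding weak_conv_def by auto

lemma dense: obtains D0 where "countable D0" "D0 \<subseteq> S" "D0 \<noteq> {}" "\<forall>s\<in>S. \<forall>e>0. \<exists>s'\<in>D0. dist s' s < e"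
proof -
  obtain T where T: "countable T" "T \<subseteq> S" "S \<subseteq> closure T" using separable by blast
  have "\<forall>s\<in>S. \<forall>e>0. \<exists>s'\<in>T. dist s' s < e" using T(3) closure_approachable by blast
  moreover have "T \<noteq> {}" using T(3) Sne by auto
  ultimately show ?thesis using that T by blast
qed

lemma integrable01: fixes g :: "'v \<Rightarrow> real" assumes "g \<in> borel_measurable Q" "\<And>v. 0 \<le> g v \<and> g v \<le> 1" shows "integrable Q g"
proof -
  have "AE x in Q. norm (g x) \<le> 1"
  proof (intro AE_I2)
    fix x show "norm (g x) \<le> 1" using assms(2)[of x] by simp
  qed
  then show ?thesis using finite_measure.integrable_const_bound[OF prob_space.finite_measure[OF Q]] assms(1) by blast
qed

lemma tight: assumes "\<tau> > 0" shows "\<exists>c N. \<forall>n\<ge>N. outer_prob P {\<omega>\<in>space P. supF M S (Fn n \<omega>) > c} < \<tau>"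
proof -
  obtain D0 where D0: "countable D0" "D0 \<subseteq> S" "D0 \<noteq> {}" "\<forall>s\<in>S. \<forall>e>0. \<exists>s'\<in>D0. dist s' s < e"
    by (rule dense)
  define sup' where "sup' v = (SUP z\<in>{..M}\<times>D0. norm (Psi v (fst z) (snd z)))" for v
  have sup_le: "supF M S (Psi v) \<le> sup' v" if v: "v \<in> space Q" for v
    unfolding supF_def sup'_def
  proof (rule SUP_dense_le)
    show "{..M}\<times>D0 \<subseteq> {..M}\<times>S" using D0 by auto
    show "{..M}\<times>D0 \<noteq> {}" using D0 by auto
    show "{..M}\<times>S \<noteq> {}" using Sne by auto
    obtain K where K: "\<forall>m\<le>M. \<forall>s\<in>S. norm (Psi v m s) \<le> K" using bdd_paths_bound inD(2) v by blast
    show "bdd_above ((\<lambda>z. norm (Psi v (fst z) (snd z))) ` ({..M}\<times>S))"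
      by (rule bdd_aboveI[of _ K]) (use K in auto)
    show "\<forall>x\<in>{..M}\<times>S. \<forall>e>0. \<exists>y\<in>{..M}\<times>D0. norm (Psi v (fst x) (snd x)) \<le> norm (Psi v (fst y) (snd y)) + e"
    proof (intro ballI allI impI)
      fix x and e :: real assume x: "x \<in> {..M}\<times>S" and e: "0 < e"
      obtain m s where xs: "x = (m,s)" "m \<le> M" "s \<in> S" using x by auto
      have "continuous_on S (\<lambda>s. Psi v m s)" using cont xs v by auto
      then obtain d where d: "d>0" "\<forall>s'\<in>S. dist s' s < d \<longrightarrow> dist (Psi v m s') (Psi v m s) < e"
        using xs(3) e unfolding continuous_on_iff by blast
      obtain s' where s': "s'\<in>D0" "dist s' s < d" using D0(4) xs(3) d(1) by blast
      then have "dist (Psi v m s') (Psi v m s) < e" using d D0(2) by auto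
      moreover have "norm (Psi v m s) \<le> norm (Psi v m s') + norm (Psi v m s - Psi v m s')"
        by (rule norm_triangle_sub)
      ultimately have "norm (Psi v m s) \<le> norm (Psi v m s') + e"
        by (simp add: dist_norm norm_minus_commute)
      then show "\<exists>y\<in>{..M}\<times>D0. norm (Psi v (fst x) (snd x)) \<le> norm (Psi v (fst y) (snd y)) + e"
        using s' xs by (intro bexI[of _ "(m,s')"]) auto
    qed
  qed
  have sup'_meas: "sup' \<in> borel_measurable Q"
    unfolding sup'_def
  proof (rule borel_measurable_cSUP)
    show "countable ({..M}\<times>D0)" using D0(1) by simp
    fix z assume "z \<in> {..M}\<times>D0"
    then have [measurable]: "(\<lambda>v. Psi v (fst z) (snd z)) \<in> borel_measurable Q"
      using meas D0(2) by auto
    show "(\<lambda>v. norm (Psi v (fst z) (snd z))) \<in> borel_measurable Q" by measurable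
  next
    fix v assume v: "v \<in> space Q"
    obtain K where K: "\<forall>m\<le>M. \<forall>s\<in>S. norm (Psi v m s) \<le> K" using bdd_paths_bound inD(2) v by blast
    show "bdd_above ((\<lambda>i. norm (Psi v (fst i) (snd i))) ` ({..M}\<times>D0))"
      using K D0(2) by (intro bdd_aboveI[of _ K]) auto
  qed
  define g where "g j v = min 1 (max 0 (sup' v - real j))" for j v
  have gmeas: "g j \<in> borel_measurable Q" for j
  proof -
    have [measurable]: "sup' \<in> borel_measurable Q" by (rule sup'_meas)
    show ?thesis unfolding g_def by measurable
  qed
  have g01: "0 \<le> g j v \<and> g j v \<le> 1" for j v unfolding g_def by auto
  have gint: "integrable Q (g j)" for j using integrable01 gmeas g01 by blast
  have "(\<lambda>j. integral\<^sup>L Q (g j)) \<longlonglongrightarrow> integral\<^sup>L Q (\<lambda>_. 0::real)"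
  proof (rule integral_dominated_convergence[where w="\<lambda>_. 1"])
    show "integrable Q (\<lambda>_. 1::real)"
      using finite_measure.integrable_const[OF prob_space.finite_measure[OF Q]] by blast
    show "AE x in Q. (\<lambda>i. g i x) \<longlonglongrightarrow> 0"
    proof (rule AE_I2)
      fix x
      have "\<forall>j\<ge>nat \<lceil>sup' x\<rceil>. g j x = 0"
      proof (intro allI impI)
        fix j assume "nat \<lceil>sup' x\<rceil> \<le> j"
        then have "sup' x \<le> real j" by linarith
        then show "g j x = 0" unfolding g_def by auto
      qed
      then have "eventually (\<lambda>j. g j x = 0) sequentially" unfolding eventually_sequentially by blast
      then show "(\<lambda>i. g i x) \<longlonglongrightarrow> 0" by (rule tendsto_eventually)
    qed
    show "\<And>i. AE x in Q. norm (g i x) \<le> 1" using g01 by auto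
  qed (use gmeas in auto)
  then have "(\<lambda>j. integral\<^sup>L Q (g j)) \<longlonglongrightarrow> 0" by simp
  from order_tendstoD(2)[OF this assms] obtain j where j: "integral\<^sup>L Q (g j) < \<tau>"
    unfolding eventually_sequentially by auto
  have "\<exists>N. \<forall>n\<ge>N. outer_prob P {\<omega>\<in>space P. max 0 (supF M S (Fn n \<omega>) - real j) > 1} < \<tau>"
  proof (rule wc_bound[OF P wc, where L=1 and g="g j"])
    show "\<forall>F\<in>(bdd_paths M S :: (nat \<Rightarrow> 'i \<Rightarrow> 'a) set). 0 \<le> max 0 (supF M S F - real j)" by auto
    show "\<forall>F\<in>(bdd_paths M S :: (nat \<Rightarrow> 'i \<Rightarrow> 'a) set). \<forall>G\<in>bdd_paths M S. max 0 (supF M S F - real j) - max 0 (supF M S G - real j) \<le> 1 * sup_dist M S F G"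
    proof (intro ballI)
      fix F G :: "nat \<Rightarrow> 'i \<Rightarrow> 'a" assume FG: "F \<in> bdd_paths M S" "G \<in> bdd_paths M S"
      have "supF M S F - supF M S G \<le> sup_dist M S F G" "0 \<le> sup_dist M S F G"
        using supF_lip[OF FG Sne] sup_dist_nonneg[OF FG Sne] by auto
      then show "max 0 (supF M S F - real j) - max 0 (supF M S G - real j) \<le> 1 * sup_dist M S F G"
        by (auto simp: max_def)
    qed
    show "\<forall>F\<in>(bdd_paths M S :: (nat \<Rightarrow> 'i \<Rightarrow> 'a) set). \<forall>G\<in>bdd_paths M S. sup_dist M S F G = sup_dist M S G F"
      using sup_dist_sym by blast
    show "\<forall>v\<in>space Q. min 1 (max 0 (supF M S (Psi v) - real j) / 1) \<le> g j v"
    proof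
      fix v assume "v \<in> space Q"
      then have "supF M S (Psi v) \<le> sup' v" by (rule sup_le)
      then show "min 1 (max 0 (supF M S (Psi v) - real j) / 1) \<le> g j v"
        unfolding g_def by (auto simp: max_def min_def)
    qed
  qed (use gmeas gint j in auto)
  then obtain N where N: "\<forall>n\<ge>N. outer_prob P {\<omega>\<in>space P. max 0 (supF M S (Fn n \<omega>) - real j) > 1} < \<tau>"
    by blast
  have "{\<omega>\<in>space P. supF M S (Fn n \<omega>) > real j + 1} = {\<omega>\<in>space P. max 0 (supF M S (Fn n \<omega>) - real j) > 1}" for n
    by (auto simp: max_def)
  then show ?thesis using N by (intro exI[of _ "real j + 1"] exI[of _ N]) auto
qed

lemma equi: assumes ep: "\<epsilon> > 0" and tp: "\<tau> > 0"
  shows "\<exists>\<eta>>0. \<exists>N. \<forall>n\<ge>N. outer_prob P {\<omega>\<in>space P. modF M S \<eta> (Fn n \<omega>) > \<epsilon>} < \<tau>"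
proof -
  obtain D0 where D0: "countable D0" "D0 \<subseteq> S" "D0 \<noteq> {}" "\<forall>s\<in>S. \<forall>e>0. \<exists>s'\<in>D0. dist s' s < e"
    by (rule dense)
  define eta where "eta j = 1 / real (Suc j)" for j
  have eta_pos: "eta j > 0" for j unfolding eta_def by simp
  define md where "md j v = (SUP z\<in>pairs M D0 (eta j). norm (Psi v (fst z) (fst (snd z)) - Psi v (fst z) (snd (snd z))))" for j v
  have bddv: "bdd_above ((\<lambda>z. norm (Psi v (fst z) (fst (snd z)) - Psi v (fst z) (snd (snd z)))) ` pairs M T \<eta>)"
    if v: "v \<in> space Q" and T: "T \<subseteq> S" for v T \<eta>
  proof -
    obtain K where K: "\<forall>m\<le>M. \<forall>s\<in>S. norm (Psi v m s) \<le> K" using bdd_paths_bound inD(2) v by blast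
    show ?thesis
    proof (rule bdd_aboveI[of _ "2*K"])
      fix x assume "x \<in> (\<lambda>z. norm (Psi v (fst z) (fst (snd z)) - Psi v (fst z) (snd (snd z)))) ` pairs M T \<eta>"
      then obtain m s t where mst: "m \<le> M" "s \<in> S" "t \<in> S" "x = norm (Psi v m s - Psi v m t)"
        using T by (auto simp: pairs_def)
      moreover have "norm (Psi v m s - Psi v m t) \<le> norm (Psi v m s) + norm (Psi v m t)" by (rule norm_triangle_ineq4)
      moreover have "norm (Psi v m s) \<le> K" "norm (Psi v m t) \<le> K" using K mst by auto
      ultimately show "x \<le> 2 * K" by linarith
    qed
  qed
  have md_le: "modF M S (eta j) (Psi v) \<le> md j v" if v: "v \<in> space Q" for j v
    unfolding modF_def md_def
  proof (rule SUP_dense_le)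
    show "pairs M D0 (eta j) \<subseteq> pairs M S (eta j)" using D0(2) by (auto simp: pairs_def)
    show "pairs M D0 (eta j) \<noteq> {}" using pairs_ne D0(3) eta_pos by blast
    show "pairs M S (eta j) \<noteq> {}" using pairs_ne Sne eta_pos by blast
    show "bdd_above ((\<lambda>z. norm (Psi v (fst z) (fst (snd z)) - Psi v (fst z) (snd (snd z)))) ` pairs M S (eta j))"
      by (rule bddv[OF v order_refl])
    show "\<forall>x\<in>pairs M S (eta j). \<forall>e>0. \<exists>y\<in>pairs M D0 (eta j).
      norm (Psi v (fst x) (fst (snd x)) - Psi v (fst x) (snd (snd x)))
        \<le> norm (Psi v (fst y) (fst (snd y)) - Psi v (fst y) (snd (snd y))) + e"
    proof (intro ballI allI impI)
      fix x and e :: real assume x: "x \<in> pairs M S (eta j)" and e: "0 < e"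
      obtain m s t where xs: "x = (m,s,t)" "m \<le> M" "s \<in> S" "t \<in> S" "dist s t < eta j"
        using x by (cases x) (auto simp: pairs_def)
      have c: "continuous_on S (\<lambda>s. Psi v m s)" using cont xs v by auto
      obtain d1 where d1: "d1>0" "\<forall>s'\<in>S. dist s' s < d1 \<longrightarrow> dist (Psi v m s') (Psi v m s) < e/2"
        using c xs(3) e unfolding continuous_on_iff by (meson half_gt_zero)
      obtain d2 where d2: "d2>0" "\<forall>s'\<in>S. dist s' t < d2 \<longrightarrow> dist (Psi v m s') (Psi v m t) < e/2"
        using c xs(4) e unfolding continuous_on_iff by (meson half_gt_zero)
      define \<rho> where "\<rho> = min (min d1 d2) ((eta j - dist s t)/2)"
      have \<rho>0: "\<rho> > 0" using d1 d2 xs(5) unfolding \<rho>_def by auto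
      have \<rho>1: "\<rho> \<le> d1" unfolding \<rho>_def by (meson min.cobounded1 order_trans)
      have \<rho>2: "\<rho> \<le> d2" unfolding \<rho>_def by (meson min.cobounded1 min.cobounded2 order_trans)
      have \<rho>3: "\<rho> \<le> (eta j - dist s t)/2" unfolding \<rho>_def by (rule min.cobounded2)
      note \<rho> = \<rho>0 \<rho>1 \<rho>2 \<rho>3
      obtain s' where s': "s'\<in>D0" "dist s' s < \<rho>" using D0(4) xs(3) \<rho>(1) by blast
      obtain t' where t': "t'\<in>D0" "dist t' t < \<rho>" using D0(4) xs(4) \<rho>(1) by blast
      have "dist s' t' \<le> dist s' s + dist s t + dist t' t"
        by (metis dist_commute dist_triangle add.commute add_le_cancel_left order_trans)
      moreover have "2 * \<rho> \<le> eta j - dist s t" using \<rho>3 by simp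
      ultimately have dst: "dist s' t' < eta j" using s'(2) t'(2) by linarith
      have "dist (Psi v m s') (Psi v m s) < e/2" "dist (Psi v m t') (Psi v m t) < e/2"
        using d1 d2 s' t' \<rho> D0(2) by auto
      moreover have "norm (Psi v m s - Psi v m t) \<le> norm (Psi v m s' - Psi v m t') + norm (Psi v m s' - Psi v m s) + norm (Psi v m t' - Psi v m t)"
        by (rule tri4)
      ultimately have "norm (Psi v m s - Psi v m t) \<le> norm (Psi v m s' - Psi v m t') + e"
        by (simp add: dist_norm)
      moreover have "(m, s', t') \<in> pairs M D0 (eta j)" using xs s' t' dst by (auto simp: pairs_def)
      ultimately show "\<exists>y\<in>pairs M D0 (eta j).
        norm (Psi v (fst x) (fst (snd x)) - Psi v (fst x) (snd (snd x)))
          \<le> norm (Psi v (fst y) (fst (snd y)) - Psi v (fst y) (snd (snd y))) + e"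
        using xs by (intro bexI[of _ "(m,s',t')"]) auto
    qed
  qed
  have md_meas: "md j \<in> borel_measurable Q" for j
    unfolding md_def
  proof (rule borel_measurable_cSUP)
    show "countable (pairs M D0 (eta j))"
      by (rule countable_subset[of _ "{..M} \<times> D0 \<times> D0"]) (use D0(1) in \<open>auto simp: pairs_def\<close>)
    fix z assume "z \<in> pairs M D0 (eta j)"
    then have [measurable]: "(\<lambda>v. Psi v (fst z) (fst (snd z))) \<in> borel_measurable Q"
        "(\<lambda>v. Psi v (fst z) (snd (snd z))) \<in> borel_measurable Q"
      using meas D0(2) by (auto simp: pairs_def)
    show "(\<lambda>v. norm (Psi v (fst z) (fst (snd z)) - Psi v (fst z) (snd (snd z)))) \<in> borel_measurable Q"
      by measurable
  next
    fix v assume v: "v \<in> space Q"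
    show "bdd_above ((\<lambda>z. norm (Psi v (fst z) (fst (snd z)) - Psi v (fst z) (snd (snd z)))) ` pairs M D0 (eta j))"
      by (rule bddv[OF v D0(2)])
  qed
  define g where "g j v = min 1 (max 0 (md j v / \<epsilon>))" for j v
  have gmeas: "g j \<in> borel_measurable Q" for j
  proof -
    have [measurable]: "md j \<in> borel_measurable Q" by (rule md_meas)
    show ?thesis unfolding g_def by measurable
  qed
  have g01: "0 \<le> g j v \<and> g j v \<le> 1" for j v unfolding g_def by auto
  have gint: "integrable Q (g j)" for j using integrable01 gmeas g01 by blast
  have "(\<lambda>j. integral\<^sup>L Q (g j)) \<longlonglongrightarrow> integral\<^sup>L Q (\<lambda>_. 0::real)"
  proof (rule integral_dominated_convergence[where w="\<lambda>_. 1"])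
    show "integrable Q (\<lambda>_. 1::real)"
      using finite_measure.integrable_const[OF prob_space.finite_measure[OF Q]] by blast
    show "AE x in Q. (\<lambda>i. g i x) \<longlonglongrightarrow> 0"
    proof (rule AE_I2)
      fix v assume v: "v \<in> space Q"
      show "(\<lambda>i. g i v) \<longlonglongrightarrow> 0"
      proof (rule LIMSEQ_I)
        fix r :: real assume r: "0 < r"
        define e where "e = min r 1 * \<epsilon> / 2"
        have e: "e > 0" using r ep unfolding e_def by simp
        have "\<forall>m\<in>{..M}. \<exists>d>0. \<forall>s\<in>S. \<forall>t\<in>S. dist t s < d \<longrightarrow> dist (Psi v m t) (Psi v m s) < e"
        proof
          fix m assume "m \<in> {..M}"
          then have "uniformly_continuous_on S (\<lambda>s. Psi v m s)"
            using cont v Scomp by (intro compact_uniformly_continuous) auto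
          then show "\<exists>d>0. \<forall>s\<in>S. \<forall>t\<in>S. dist t s < d \<longrightarrow> dist (Psi v m t) (Psi v m s) < e"
            unfolding uniformly_continuous_on_def using e by blast
        qed
        then obtain dm where dm: "\<forall>m\<in>{..M}. dm m > 0 \<and> (\<forall>s\<in>S. \<forall>t\<in>S. dist t s < dm m \<longrightarrow> dist (Psi v m t) (Psi v m s) < e)"
          by metis
        define \<delta> where "\<delta> = Min (dm ` {..M})"
        have \<delta>: "\<delta> > 0" unfolding \<delta>_def using dm by (subst Min_gr_iff) auto
        have \<delta>le: "\<delta> \<le> dm m" if "m \<le> M" for m unfolding \<delta>_def using that by (intro Min_le) auto
        obtain J where J: "inverse (real (Suc J)) < \<delta>" using reals_Archimedean[OF \<delta>] by blast
        show "\<exists>no. \<forall>n\<ge>no. norm (g n v - 0) < r"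
        proof (intro exI allI impI)
          fix j assume j: "J \<le> j"
          have "eta j \<le> eta J" unfolding eta_def using j by (simp add: frac_le)
          then have ej: "eta j < \<delta>" using J unfolding eta_def by (simp add: inverse_eq_divide)
          have "md j v \<le> e" unfolding md_def
          proof (rule cSUP_least)
            show "pairs M D0 (eta j) \<noteq> {}" using pairs_ne D0(3) eta_pos by blast
            fix z assume "z \<in> pairs M D0 (eta j)"
            then obtain m s t where z: "z = (m,s,t)" "m \<le> M" "s \<in> S" "t \<in> S" "dist s t < eta j"
              using D0(2) by (cases z) (auto simp: pairs_def)
            then have "dist s t < dm m" using ej \<delta>le[OF z(2)] by linarith
            then have "dist (Psi v m s) (Psi v m t) < e" using dm z by auto
            then show "norm (Psi v (fst z) (fst (snd z)) - Psi v (fst z) (snd (snd z))) \<le> e"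
              using z by (simp add: dist_norm)
          qed
          then have "md j v / \<epsilon> \<le> e / \<epsilon>" using ep by (simp add: divide_right_mono)
          also have "e / \<epsilon> = min r 1 / 2" unfolding e_def using ep by simp
          finally have X: "md j v / \<epsilon> \<le> min r 1 / 2" .
          have "0 \<le> min r 1 / 2" using r by simp
          then have "max 0 (md j v / \<epsilon>) \<le> min r 1 / 2" using X by (rule max.boundedI)
          then have "g j v \<le> min r 1 / 2" unfolding g_def by (meson min.coboundedI2)
          then show "norm (g j v - 0) < r" using g01[of j v] r by auto
        qed
      qed
    qed
    show "\<And>i. AE x in Q. norm (g i x) \<le> 1"
    proof -
      fix i show "AE x in Q. norm (g i x) \<le> 1"
      proof (intro AE_I2)
        fix x show "norm (g i x) \<le> 1" using g01[of i x] by simp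
      qed
    qed
  qed (use gmeas in auto)
  then have "(\<lambda>j. integral\<^sup>L Q (g j)) \<longlonglongrightarrow> 0" by simp
  from order_tendstoD(2)[OF this tp] obtain j where j: "integral\<^sup>L Q (g j) < \<tau>"
    unfolding eventually_sequentially by auto
  have "\<exists>N. \<forall>n\<ge>N. outer_prob P {\<omega>\<in>space P. modF M S (eta j) (Fn n \<omega>) > \<epsilon>} < \<tau>"
  proof (rule wc_bound[OF P wc, where L=2 and g="g j"])
    show "\<forall>F\<in>(bdd_paths M S :: (nat \<Rightarrow> 'i \<Rightarrow> 'a) set). 0 \<le> modF M S (eta j) F"
    proof
      fix F :: "nat \<Rightarrow> 'i \<Rightarrow> 'a" assume F: "F \<in> bdd_paths M S"
      obtain s where "s \<in> S" using Sne by auto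
      then show "0 \<le> modF M S (eta j) F" using modF_upper[OF F, of 0 s s "eta j"] eta_pos by simp
    qed
    show "\<forall>F\<in>(bdd_paths M S :: (nat \<Rightarrow> 'i \<Rightarrow> 'a) set). \<forall>G\<in>bdd_paths M S. modF M S (eta j) F - modF M S (eta j) G \<le> 2 * sup_dist M S F G"
      using modF_lip Sne eta_pos by blast
    show "\<forall>F\<in>(bdd_paths M S :: (nat \<Rightarrow> 'i \<Rightarrow> 'a) set). \<forall>G\<in>bdd_paths M S. sup_dist M S F G = sup_dist M S G F"
      using sup_dist_sym by blast
    show "\<forall>v\<in>space Q. min 1 (modF M S (eta j) (Psi v) / \<epsilon>) \<le> g j v"
    proof
      fix v assume "v \<in> space Q"
      then have "modF M S (eta j) (Psi v) \<le> md j v" by (rule md_le)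
      then have "modF M S (eta j) (Psi v) / \<epsilon> \<le> md j v / \<epsilon>" using ep by (simp add: divide_right_mono)
      then show "min 1 (modF M S (eta j) (Psi v) / \<epsilon>) \<le> g j v"
        unfolding g_def by (auto simp: max_def min_def)
    qed
  qed (use gmeas gint j ep in auto)
  then show ?thesis using eta_pos by blast
qed

end


lemma avg_norm: assumes "M \<ge> 1" "\<And>m. m \<in> {1..M} \<Longrightarrow> norm (X m) \<le> U"
  shows "norm ((1/real M) *\<^sub>R (\<Sum>m\<in>{1..M}. X m)) \<le> U"
proof -
  have "norm (\<Sum>m\<in>{1..M}. X m) \<le> (\<Sum>m\<in>{1..M}. U)" by (rule sum_norm_le) (use assms in auto)
  also have "\<dots> = real M * U" by simp
  finally have a: "norm (\<Sum>m\<in>{1..M}. X m) \<le> real M * U" .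
  have "norm ((1/real M) *\<^sub>R (\<Sum>m\<in>{1..M}. X m)) = (1/real M) * norm (\<Sum>m\<in>{1..M}. X m)" by simp
  also have "\<dots> \<le> (1/real M) * (real M * U)" using a by (intro mult_left_mono) auto
  also have "\<dots> = U" using assms(1) by simp
  finally show ?thesis .
qed

lemma gam_norm: assumes "\<And>r. r \<le> k \<Longrightarrow> norm (Y r) \<le> U"
  shows "norm (\<Sum>r\<le>k. gam r *\<^sub>R Y r) \<le> (\<Sum>r\<le>k. \<bar>gam r\<bar>) * U"
proof -
  have "norm (\<Sum>r\<le>k. gam r *\<^sub>R Y r) \<le> (\<Sum>r\<le>k. norm (gam r *\<^sub>R Y r))" by (rule norm_sum)
  also have "\<dots> \<le> (\<Sum>r\<le>k. \<bar>gam r\<bar> * U)"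
    using assms by (intro sum_mono) (auto intro: mult_left_mono)
  also have "\<dots> = (\<Sum>r\<le>k. \<bar>gam r\<bar>) * U" by (simp add: sum_distrib_right)
  finally show ?thesis .
qed

lemma tb_diff: assumes "M \<ge> 1"
  shows "thetabar M thetahat n b l \<omega> - t = (1/real M) *\<^sub>R (\<Sum>m\<in>{1..M}. (thetahat m n b l \<omega> - t))"
proof -
  have "(\<Sum>m\<in>{1..M}. (thetahat m n b l \<omega> - t)) = (\<Sum>m\<in>{1..M}. thetahat m n b l \<omega>) - real M *\<^sub>R t"
    by (simp add: sum_subtractf sum_constant_scaleR del: sum_constant)
  then show ?thesis using assms unfolding thetabar_def by (simp add: scaleR_diff_right)
qed

lemma tbk_diff: assumes "M \<ge> 1"
  shows "thetabar_k M thetahat k gam dl n b l \<omega> - theta_k theta k gam dl b l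
    = (\<Sum>r\<le>k. gam r *\<^sub>R ((1/real M) *\<^sub>R (\<Sum>m\<in>{1..M}. (thetahat m n b (dl^r*l) \<omega> - theta b (dl^r*l)))))"
  unfolding thetabar_k_def theta_k_def
  by (simp add: sum_subtractf[symmetric] scaleR_diff_right[symmetric] tb_diff[OF assms])

lemma tb_split: assumes "M \<ge> 1"
  shows "s *\<^sub>R (thetabar M thetahat n b1 c \<omega> - thetabar M thetahat n b0 c \<omega>)
    = (1/real M) *\<^sub>R (\<Sum>m\<in>{1..M}. (s *\<^sub>R (thetahat m n b1 c \<omega> - theta b1 c) - s *\<^sub>R (thetahat m n b0 c \<omega> - theta b0 c)))
      + s *\<^sub>R (theta b1 c - theta b0 c)"
proof -
  have "thetabar M thetahat n b1 c \<omega> - thetabar M thetahat n b0 c \<omega>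
     = (thetabar M thetahat n b1 c \<omega> - theta b1 c) - (thetabar M thetahat n b0 c \<omega> - theta b0 c) + (theta b1 c - theta b0 c)"
    by simp
  also have "\<dots> = (1/real M) *\<^sub>R (\<Sum>m\<in>{1..M}. (thetahat m n b1 c \<omega> - theta b1 c))
      - (1/real M) *\<^sub>R (\<Sum>m\<in>{1..M}. (thetahat m n b0 c \<omega> - theta b0 c)) + (theta b1 c - theta b0 c)"
    by (simp add: tb_diff[OF assms])
  finally have e: "thetabar M thetahat n b1 c \<omega> - thetabar M thetahat n b0 c \<omega> = \<dots>" .
  have "(\<Sum>m\<in>{1..M}. (s *\<^sub>R (thetahat m n b1 c \<omega> - theta b1 c) - s *\<^sub>R (thetahat m n b0 c \<omega> - theta b0 c)))
     = s *\<^sub>R ((\<Sum>m\<in>{1..M}. (thetahat m n b1 c \<omega> - theta b1 c)) - (\<Sum>m\<in>{1..M}. (thetahat m n b0 c \<omega> - theta b0 c)))"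
    by (simp add: sum_subtractf scaleR_sum_right scaleR_diff_right)
  then show ?thesis unfolding e by (simp add: scaleR_diff_right scaleR_add_right)
qed

lemma ident: assumes "M \<ge> 1"
  shows "s *\<^sub>R (thetabar_k M thetahat k gam dl n b1 l \<omega> - thetabar_k M thetahat k gam dl n b0 l \<omega>) - Jd
   = (\<Sum>r\<le>k. gam r *\<^sub>R ((1/real M) *\<^sub>R (\<Sum>m\<in>{1..M}. (s *\<^sub>R (thetahat m n b1 (dl^r*l) \<omega> - theta b1 (dl^r*l))
          - s *\<^sub>R (thetahat m n b0 (dl^r*l) \<omega> - theta b0 (dl^r*l))))))
     + s *\<^sub>R (theta_k theta k gam dl b1 l - theta b1 0) - s *\<^sub>R (theta_k theta k gam dl b0 l - theta b0 0)
     + (s *\<^sub>R (theta b1 0 - theta b0 0) - Jd)"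
proof -
  have "s *\<^sub>R (thetabar_k M thetahat k gam dl n b1 l \<omega> - thetabar_k M thetahat k gam dl n b0 l \<omega>)
     = (\<Sum>r\<le>k. gam r *\<^sub>R (s *\<^sub>R (thetabar M thetahat n b1 (dl^r*l) \<omega> - thetabar M thetahat n b0 (dl^r*l) \<omega>)))"
    unfolding thetabar_k_def
    by (simp add: sum_subtractf[symmetric] scaleR_sum_right scaleR_diff_right mult.commute)
  also have "\<dots> = (\<Sum>r\<le>k. gam r *\<^sub>R ((1/real M) *\<^sub>R (\<Sum>m\<in>{1..M}. (s *\<^sub>R (thetahat m n b1 (dl^r*l) \<omega> - theta b1 (dl^r*l))
          - s *\<^sub>R (thetahat m n b0 (dl^r*l) \<omega> - theta b0 (dl^r*l))))))
      + (\<Sum>r\<le>k. gam r *\<^sub>R (s *\<^sub>R (theta b1 (dl^r*l) - theta b0 (dl^r*l))))"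
    apply (rule trans[OF sum.cong[OF refl]])
     apply (subst tb_split[OF assms], rule refl)
    apply (simp only: scaleR_add_right sum.distrib)
    done
  also have "(\<Sum>r\<le>k. gam r *\<^sub>R (s *\<^sub>R (theta b1 (dl^r*l) - theta b0 (dl^r*l))))
      = s *\<^sub>R (theta_k theta k gam dl b1 l - theta_k theta k gam dl b0 l)"
    unfolding theta_k_def by (simp add: sum_subtractf[symmetric] scaleR_sum_right scaleR_diff_right mult.commute)
  finally show ?thesis by (simp add: algebra_simps)
qed



lemma so_vanish: "small_op P X r \<Longrightarrow> \<epsilon> > 0 \<Longrightarrow> vanish P (\<lambda>n. {\<omega>\<in>space P. norm (X n \<omega>) > \<epsilon> * r n \<omega>})"
  unfolding small_op_def by (intro lim_vanish) auto

theorem propositionB1: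
  fixes P :: "'w measure" and Q :: "'v measure"
    and Mx :: "'x measure" and Me :: "'e measure" and My :: "'y measure"
    and x :: "nat \<Rightarrow> 'w \<Rightarrow> 'x" and yobs :: "nat \<Rightarrow> 'w \<Rightarrow> 'y"
    and eta :: "nat \<Rightarrow> nat \<Rightarrow> 'w \<Rightarrow> 'e"
    and M :: nat
    and ystr :: "'x \<times> 'e \<Rightarrow> real^'b \<Rightarrow> real \<Rightarrow> 'y"
    and B :: "(real^'b) set" and Theta :: "(real^'p) set"
    and ell :: "'y \<Rightarrow> 'x \<Rightarrow> real^'p \<Rightarrow> real"
    and thetahat :: "nat \<Rightarrow> nat \<Rightarrow> real^'b \<Rightarrow> real \<Rightarrow> 'w \<Rightarrow> real^'p"
    and theta :: "real^'b \<Rightarrow> real \<Rightarrow> real^'p"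
    and dl :: real and k k0 :: nat and gam :: "nat \<Rightarrow> real"
    and beta0 :: "real^'b" and lam :: "nat \<Rightarrow> 'w \<Rightarrow> real"
    and W :: "real^'p^'p" and Wn :: "nat \<Rightarrow> 'w \<Rightarrow> real^'p^'p"
    and psi :: "nat \<Rightarrow> (real^'b) \<times> real \<Rightarrow> 'v \<Rightarrow> real^'p"
    and phi :: "nat \<Rightarrow> 'v \<Rightarrow> real^'p"
    and H Sigma R :: "real^'p^'p"
    and deltan :: "nat \<Rightarrow> 'w \<Rightarrow> real^'b"
  defines "theta0 \<equiv> theta beta0 0"
    and "psin \<equiv> (\<lambda>m n (s :: (real^'b) \<times> real) \<omega>. if m = 0
            then sqrt (real n) *\<^sub>R (thetahat 0 n beta0 0 \<omega> - theta beta0 0)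
            else sqrt (real n) *\<^sub>R (thetahat m n (fst s) (snd s) \<omega> - theta (fst s) (snd s)))"
    and "phin \<equiv> (\<lambda>m n \<omega>. (1 / sqrt (real n)) *\<^sub>R
            (\<Sum>i<n. grad (\<lambda>t. ell_i ell ystr yobs x eta m i beta0 0 t \<omega>) (theta beta0 0)))"
    and "Lpop \<equiv> (\<lambda>t. integral\<^sup>L P (\<lambda>\<omega>. ell (yobs 0 \<omega>) (x 0 \<omega>) t))"
  assumes P: "prob_space P" and Q: "prob_space Q"
    \<comment> \<open>sampling: (y_i,x_i) iid; eta^m_i (m \<ge> 1) iid over (i,m), independent of the x_i\<close>
    and iid_yx: "prob_space.indep_vars P (\<lambda>_. My \<Otimes>\<^sub>M Mx) (\<lambda>i \<omega>. (yobs i \<omega>, x i \<omega>)) UNIV"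
    and iid_yx2: "\<forall>i. distr P (My \<Otimes>\<^sub>M Mx) (\<lambda>\<omega>. (yobs i \<omega>, x i \<omega>))
                     = distr P (My \<Otimes>\<^sub>M Mx) (\<lambda>\<omega>. (yobs 0 \<omega>, x 0 \<omega>))"
    and iid_eta: "prob_space.indep_vars P (\<lambda>_. Me) (\<lambda>mi \<omega>. eta (fst mi) (snd mi) \<omega>) ({1..M} \<times> UNIV)"
    and iid_eta2: "\<forall>m\<in>{1..M}. \<forall>i. distr P Me (eta m i) = distr P Me (eta 1 0)"
    and indep_eta_x: "indep_rv P
        (Pi\<^sub>M UNIV (\<lambda>_. Mx)) (\<lambda>\<omega>. (\<lambda>i. x i \<omega>))
        (Pi\<^sub>M ({1..M} \<times> UNIV) (\<lambda>_. Me)) (\<lambda>\<omega>. restrict (\<lambda>mi. eta (fst mi) (snd mi) \<omega>) ({1..M} \<times> UNIV))"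
    and eta0_meas: "\<forall>i. eta 0 i \<in> measurable P Me"
    and M: "M \<ge> 1"
    and B: "compact B"
    \<comment> \<open>estimators: maximisers of the (observed / simulated) auxiliary criterion\<close>
    and thetahat0: "\<forall>n b l \<omega>. thetahat 0 n b l \<omega> = thetahat 0 n beta0 0 \<omega>"
    and thetahat_max: "\<forall>m\<le>M. \<forall>n. \<forall>b\<in>B. \<forall>l\<in>{0..1}. \<forall>\<omega>\<in>space P.
        thetahat m n b l \<omega> \<in> Theta \<and>
        (\<forall>t\<in>Theta. Ln ell ystr yobs x eta m n b l t \<omega> \<le> Ln ell ystr yobs x eta m n b l (thetahat m n b l \<omega>) \<omega>)"
    \<comment> \<open>jackknife\<close>
    and dl: "0 < dl" "dl < 1"
    and gam_sum: "(\<Sum>r\<le>k. gam r) = 1"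
    and jack: "\<exists>C. \<exists>\<epsilon>\<in>{0<..1}. \<forall>b\<in>B. \<forall>l\<in>{0..\<epsilon>}.
        norm (theta_k theta k gam dl b l - theta b 0) \<le> C * l ^ (k + 1)"
    \<comment> \<open>Assumption R\<close>
    and R1: "beta0 \<in> interior B" "\<forall>i. \<forall>\<omega>\<in>space P. yobs i \<omega> = ystr (x i \<omega>, eta 0 i \<omega>) beta0 0"
    and R2: "theta0 \<in> interior Theta"
    and R3: "\<forall>l\<in>{0..1}. diff_k (Suc k0) (interior B) (\<lambda>b. theta b l)"
    and R4: "inj_on (\<lambda>b. theta b 0) B"
    and R5: "\<forall>n. lam n \<in> borel_measurable P" "\<forall>n. \<forall>\<omega>\<in>space P. lam n \<omega> \<in> {0..1}"
       "small_op P lam (\<lambda>_ _. 1)"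
    and R6: "k \<le> k0" "small_op P (\<lambda>n \<omega>. sqrt (real n) * lam n \<omega> ^ (k + 1)) (\<lambda>_ _. 1)"
    and R8: "small_op P (\<lambda>n \<omega>. Wn n \<omega> - W) (\<lambda>_ _. 1)" "\<forall>v. v \<noteq> 0 \<longrightarrow> v \<bullet> (W *v v) > 0"
    \<comment> \<open>Assumption H\<close>
    and H1: "\<forall>n. \<forall>\<omega>\<in>space P. C2_on (interior Theta) (\<lambda>t. Ln ell ystr yobs x eta 0 n beta0 0 t \<omega>)"
    and H2: "\<forall>K. compact K \<and> K \<subseteq> interior Theta \<longrightarrow>
        op_unif P K (\<lambda>n t \<omega>. Ln ell ystr yobs x eta 0 n beta0 0 t \<omega> - Lpop t) \<and>
        op_unif P K (\<lambda>n t \<omega>. grad (\<lambda>s. Ln ell ystr yobs x eta 0 n beta0 0 s \<omega>) t - grad Lpop t) \<and>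
        op_unif P K (\<lambda>n t \<omega>. hess (\<lambda>s. Ln ell ystr yobs x eta 0 n beta0 0 s \<omega>) t - hess Lpop t) \<and>
        (\<forall>m1\<le>M. \<forall>m2\<le>M. op_unif P ((B \<times> {0..1} \<times> K) \<times> (B \<times> {0..1} \<times> K))
          (\<lambda>n ((b1, l1, t1), (b2, l2, t2)) \<omega>.
             (1 / real n) *\<^sub>R (\<Sum>i<n. outerp (grad (\<lambda>s. ell_i ell ystr yobs x eta m1 i b1 l1 s \<omega>) t1)
                                            (grad (\<lambda>s. ell_i ell ystr yobs x eta m2 i b2 l2 s \<omega>) t2))
             - integral\<^sup>L P (\<lambda>\<omega>'. outerp (grad (\<lambda>s. ell_i ell ystr yobs x eta m1 0 b1 l1 s \<omega>') t1)
                                          (grad (\<lambda>s. ell_i ell ystr yobs x eta m2 0 b2 l2 s \<omega>') t2))))"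
    and H3: "weak_conv P (\<lambda>n \<omega>. \<lambda>m s. psin m n s \<omega>) Q (\<lambda>v m s. psi m s v)
        (bdd_paths M (B \<times> {0..1})) (sup_dist M (B \<times> {0..1}))"
      "\<forall>m\<le>M. mean0_cont_gaussian_process Q (B \<times> {0..1}) (psi m)"
    and H4: "\<forall>bn. (\<forall>n. bn n \<in> borel_measurable P) \<and> small_op P (\<lambda>n \<omega>. bn n \<omega> - beta0) (\<lambda>_ _. 1) \<longrightarrow>
        (\<forall>m\<le>M. small_op P (\<lambda>n \<omega>. psin m n (bn n \<omega>, lam n \<omega>) \<omega> + matrix_inv H *v phin m n \<omega>) (\<lambda>_ _. 1))"
      "H = hess Lpop theta0"
      "\<forall>n\<ge>1. integral\<^sup>L P (\<lambda>\<omega>. hess (\<lambda>t. Ln ell ystr yobs x eta 0 n beta0 0 t \<omega>) theta0) = H"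
      "invertible H"
      "weak_conv P (\<lambda>n \<omega>. \<lambda>m. phin m n \<omega>) Q (\<lambda>v m. phi m v) UNIV (max_dist M)"
      "\<forall>c. gaussian_rv Q (\<lambda>v. \<Sum>m\<le>M. c m \<bullet> phi m v)"
      "\<forall>m\<le>M. integral\<^sup>L Q (\<lambda>v. outerp (phi m v) (phi m v)) = Sigma \<and>
         (\<forall>n\<ge>1. integral\<^sup>L P (\<lambda>\<omega>. outerp (phin m n \<omega>) (phin m n \<omega>)) = Sigma)"
      "\<forall>m1\<le>M. \<forall>m2\<le>M. m1 \<noteq> m2 \<longrightarrow> integral\<^sup>L Q (\<lambda>v. outerp (phi m1 v) (phi m2 v)) = R \<and>
         (\<forall>n\<ge>1. integral\<^sup>L P (\<lambda>\<omega>. outerp (phin m1 n \<omega>) (phin m2 n \<omega>)) = R)"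
    and H5_0: "\<forall>m\<in>{1..M}. op_unif P B (\<lambda>n b \<omega>. thetahat m n b (lam n \<omega>) \<omega> - theta b 0)"
    \<comment> \<open>the local sequence beta_n = beta0 + n^(-1/2) delta_n\<close>
    and deltan: "\<forall>n. deltan n \<in> borel_measurable P" "small_op P deltan (\<lambda>n _. sqrt (real n))"
  shows "op_unif P B (\<lambda>n b \<omega>. thetabar_k M thetahat k gam dl n b (lam n \<omega>) \<omega>
                                 - theta_k theta k gam dl b (lam n \<omega>)) \<and>
         big_Op P (\<lambda>n \<omega>. theta_k theta k gam dl beta0 (lam n \<omega>) - theta beta0 0)
                  (\<lambda>n \<omega>. lam n \<omega> ^ (k + 1)) \<and>
         small_op P (\<lambda>n \<omega>.
            sqrt (real n) *\<^sub>R (thetabar_k M thetahat k gam dl n (beta0 + (1 / sqrt (real n)) *\<^sub>R deltan n \<omega>) (lam n \<omega>) \<omega>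
                              - thetabar_k M thetahat k gam dl n beta0 (lam n \<omega>) \<omega>)
            - jacobian (\<lambda>b. theta b 0) (at beta0) *v deltan n \<omega>)
          (\<lambda>n \<omega>. 1 + norm (deltan n \<omega>))"
proof -
  define S where "S = B \<times> {0..1::real}"
  define Fn where "Fn = (\<lambda>n \<omega> m s. psin m n s \<omega>)"
  have beta0B: "beta0 \<in> B" using R1(1) interior_subset by blast
  have Sne: "S \<noteq> {}" using beta0B unfolding S_def by auto
  have Scomp: "compact S" unfolding S_def using B by (intro compact_Times compact_Icc)
  have mg: "mean0_cont_gaussian_process Q S (psi m)" if "m \<le> M" for m
    using H3(2) that unfolding S_def by blast
  have cont: "\<forall>m\<le>M. \<forall>v\<in>space Q. continuous_on S (\<lambda>s. psi m s v)"
  proof (intro allI impI)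
    fix m assume "m \<le> M"
    from mg[OF this] show "\<forall>v\<in>space Q. continuous_on S (\<lambda>s. psi m s v)"
      unfolding mean0_cont_gaussian_process_def by (rule conjunct2[OF conjunct2])
  qed
  have meas: "\<forall>m\<le>M. \<forall>s\<in>S. (\<lambda>v. psi m s v) \<in> borel_measurable Q"
  proof (intro allI impI ballI)
    fix m s assume m: "m \<le> M" and s: "s \<in> S"
    from mg[OF m] have g: "\<forall>S' c. finite S' \<and> S' \<subseteq> S \<longrightarrow> gaussian_rv Q (\<lambda>v. \<Sum>s\<in>S'. c s \<bullet> psi m s v)"
      unfolding mean0_cont_gaussian_process_def by (rule conjunct1)
    show "(\<lambda>v. psi m s v) \<in> borel_measurable Q"
    proof (subst borel_measurable_euclidean_space, intro ballI)
      fix i :: "real^'p" assume i: "i \<in> Basis"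
      have "gaussian_rv Q (\<lambda>v. \<Sum>s'\<in>{s}. (\<lambda>_. i) s' \<bullet> psi m s' v)" using g[rule_format, of "{s}" "\<lambda>_. i"] s by simp
      then have "(\<lambda>v. i \<bullet> psi m s v) \<in> borel_measurable Q" unfolding gaussian_rv_def by (elim conjE) simp
      then show "(\<lambda>v. psi m s v \<bullet> i) \<in> borel_measurable Q" by (simp add: inner_commute)
    qed
  qed
  interpret W: wcs P Q Fn "\<lambda>v m s. psi m s v" M S
  proof (rule wcs.intro)
    show "weak_conv P Fn Q (\<lambda>v m s. psi m s v) (bdd_paths M S) (sup_dist M S)"
      using H3(1) unfolding Fn_def S_def by simp
  qed (fact P | fact Q | fact Sne | fact Scomp | fact cont | fact meas)+
  have lam01: "\<forall>n. \<forall>\<omega>\<in>space P. 0 \<le> lam n \<omega> \<and> lam n \<omega> \<le> 1" using R5(2) by auto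
  obtain C \<epsilon>0 where e0: "\<epsilon>0 \<in> {0<..1}" and jk: "\<forall>b\<in>B. \<forall>l\<in>{0..\<epsilon>0}.
        norm (theta_k theta k gam dl b l - theta b 0) \<le> C * l ^ (k + 1)" using jack by blast
  have lamvan: "vanish P (\<lambda>n. {\<omega>\<in>space P. norm (lam n \<omega>) > a * 1})" if "a > 0" for a
    by (rule so_vanish[OF R5(3) that])
  have remvan: "vanish P (\<lambda>n. {\<omega>\<in>space P. norm (sqrt (real n) * lam n \<omega> ^ (k + 1)) > a * 1})" if "a > 0" for a
    by (rule so_vanish[OF R6(2) that])
  have farvan: "vanish P (\<lambda>n. {\<omega>\<in>space P. norm (deltan n \<omega>) > a * sqrt (real n)})" if "a > 0" for a
    by (rule so_vanish[OF deltan(2) that])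
  have psin_m: "psin m n (b, c) \<omega> = sqrt (real n) *\<^sub>R (thetahat m n b c \<omega> - theta b c)" if "m \<in> {1..M}" for m n b c \<omega>
    using that unfolding psin_def by auto
  have cS: "dl ^ r * l \<in> {0..1}" if "l \<in> {0..1}" for r l
  proof -
    have "0 \<le> dl ^ r" "dl ^ r \<le> 1" using dl by (auto intro: power_le_one)
    then show ?thesis using that by (auto intro: mult_le_one)
  qed
  define \<Gamma> where "\<Gamma> = (\<Sum>r\<le>k. \<bar>gam r\<bar>) + 1"
  have \<Gamma>: "\<Gamma> > 0" "(\<Sum>r\<le>k. \<bar>gam r\<bar>) \<le> \<Gamma>" unfolding \<Gamma>_def
    by (auto intro: sum_nonneg add_nonneg_pos)
  have bound_i: "norm (thetabar_k M thetahat k gam dl n b (lam n \<omega>) \<omega> - theta_k theta k gam dl b (lam n \<omega>))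
       \<le> \<Gamma> * (supF M S (Fn n \<omega>) / sqrt (real n))"
    if n: "n \<ge> 1" and \<omega>: "\<omega> \<in> space P" and b: "b \<in> B" for n \<omega> b
  proof -
    have inD: "Fn n \<omega> \<in> bdd_paths M S" using W.inD(1) \<omega> by blast
    have sn: "sqrt (real n) > 0" using n by simp
    have "norm (Fn n \<omega> 0 (beta0, 0)) \<le> supF M S (Fn n \<omega>)"
      using supF_upper[OF inD, of 0 "(beta0, 0)"] beta0B unfolding S_def by auto
    then have "0 \<le> supF M S (Fn n \<omega>)" using norm_ge_zero order_trans by blast
    then have U0: "0 \<le> supF M S (Fn n \<omega>) / sqrt (real n)" using sn by simp
    have "norm (thetabar_k M thetahat k gam dl n b (lam n \<omega>) \<omega> - theta_k theta k gam dl b (lam n \<omega>))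
      \<le> (\<Sum>r\<le>k. \<bar>gam r\<bar>) * (supF M S (Fn n \<omega>) / sqrt (real n))"
      unfolding tbk_diff[OF M]
    proof (rule gam_norm, rule avg_norm[OF M])
      fix r m assume r: "r \<le> k" and m: "m \<in> {1..M}"
      have cs: "(b, dl ^ r * lam n \<omega>) \<in> S" using b cS lam01 \<omega> unfolding S_def by auto
      have "thetahat m n b (dl ^ r * lam n \<omega>) \<omega> - theta b (dl ^ r * lam n \<omega>)
           = (1 / sqrt (real n)) *\<^sub>R Fn n \<omega> m (b, dl ^ r * lam n \<omega>)"
        using sn unfolding Fn_def psin_m[OF m] by simp
      also have "norm \<dots> \<le> supF M S (Fn n \<omega>) / sqrt (real n)"
        using supF_upper[OF inD, of m "(b, dl ^ r * lam n \<omega>)"] m cs sn by (simp add: divide_right_mono)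
      finally show "norm (thetahat m n b (dl ^ r * lam n \<omega>) \<omega> - theta b (dl ^ r * lam n \<omega>))
           \<le> supF M S (Fn n \<omega>) / sqrt (real n)" .
    qed
    also have "\<dots> \<le> \<Gamma> * (supF M S (Fn n \<omega>) / sqrt (real n))" using \<Gamma>(2) U0 by (rule mult_right_mono)
    finally show ?thesis .
  qed
  have part1: "op_unif P B (\<lambda>n b \<omega>. thetabar_k M thetahat k gam dl n b (lam n \<omega>) \<omega>
                                 - theta_k theta k gam dl b (lam n \<omega>))"
    unfolding op_unif_def
  proof (intro allI impI vanish_lim)
    fix \<epsilon> :: real assume ep: "\<epsilon> > 0"
    show "vanish P (\<lambda>n. {\<omega> \<in> space P. \<exists>b\<in>B. \<epsilon> < norm (thetabar_k M thetahat k gam dl n b (lam n \<omega>) \<omega> - theta_k theta k gam dl b (lam n \<omega>))})"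
      unfolding vanish_def
    proof (intro allI impI)
      fix \<tau> :: real assume \<tau>: "\<tau> > 0"
      obtain c N where cN: "\<forall>n\<ge>N. outer_prob P {\<omega>\<in>space P. supF M S (Fn n \<omega>) > c} < \<tau>"
        using W.tight[OF \<tau>] by blast
      define N' where "N' = max N (max 1 (nat \<lceil>(c * \<Gamma> / \<epsilon>)\<^sup>2\<rceil>))"
      show "\<exists>N. \<forall>n\<ge>N. outer_prob P {\<omega> \<in> space P. \<exists>b\<in>B. \<epsilon> < norm (thetabar_k M thetahat k gam dl n b (lam n \<omega>) \<omega> - theta_k theta k gam dl b (lam n \<omega>))} < \<tau>"
      proof (intro exI[of _ N'] allI impI)
        fix n assume nN: "N' \<le> n"
        then have n1: "n \<ge> 1" and nN0: "n \<ge> N" unfolding N'_def by auto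
        have "(c * \<Gamma> / \<epsilon>)\<^sup>2 \<le> real n" using nN unfolding N'_def by linarith
        then have "c * \<Gamma> / \<epsilon> \<le> sqrt (real n)" by (rule real_le_rsqrt)
        then have cG: "c * \<Gamma> \<le> \<epsilon> * sqrt (real n)" using ep by (simp add: divide_le_eq mult.commute)
        have sn: "sqrt (real n) > 0" using n1 by simp
        have "{\<omega> \<in> space P. \<exists>b\<in>B. \<epsilon> < norm (thetabar_k M thetahat k gam dl n b (lam n \<omega>) \<omega> - theta_k theta k gam dl b (lam n \<omega>))}
          \<subseteq> {\<omega>\<in>space P. supF M S (Fn n \<omega>) > c}"
        proof safe
          fix \<omega> b assume \<omega>: "\<omega> \<in> space P" and b: "b \<in> B"
            and gt: "\<epsilon> < norm (thetabar_k M thetahat k gam dl n b (lam n \<omega>) \<omega> - theta_k theta k gam dl b (lam n \<omega>))"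
          have "\<epsilon> < \<Gamma> * (supF M S (Fn n \<omega>) / sqrt (real n))" using bound_i[OF n1 \<omega> b] gt by linarith
          then have "\<epsilon> * sqrt (real n) < \<Gamma> * supF M S (Fn n \<omega>)" using sn by (simp add: field_simps)
          then have "c * \<Gamma> < supF M S (Fn n \<omega>) * \<Gamma>" using cG by (simp add: mult.commute)
          then show "c < supF M S (Fn n \<omega>)" using \<Gamma>(1) by simp
        qed
        then show "outer_prob P {\<omega> \<in> space P. \<exists>b\<in>B. \<epsilon> < norm (thetabar_k M thetahat k gam dl n b (lam n \<omega>) \<omega> - theta_k theta k gam dl b (lam n \<omega>))} < \<tau>"
          using op_mono cN nN0 by (meson le_less_trans)
      qed
    qed
  qed
  have part2: "big_Op P (\<lambda>n \<omega>. theta_k theta k gam dl beta0 (lam n \<omega>) - theta beta0 0)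
                  (\<lambda>n \<omega>. lam n \<omega> ^ (k + 1))"
    unfolding big_Op_def
  proof (intro allI impI)
    fix \<tau> :: real assume \<tau>: "\<tau> > 0"
    obtain N where N: "\<forall>n\<ge>N. outer_prob P {\<omega>\<in>space P. norm (lam n \<omega>) > \<epsilon>0 * 1} < \<tau>"
      using lamvan[of \<epsilon>0] e0 \<tau> unfolding vanish_def by auto
    show "\<exists>K N. \<forall>n\<ge>N. outer_prob P {\<omega> \<in> space P. K * lam n \<omega> ^ (k + 1) < norm (theta_k theta k gam dl beta0 (lam n \<omega>) - theta beta0 0)} < \<tau>"
    proof (intro exI[of _ C] exI[of _ N] allI impI)
      fix n assume nN: "N \<le> n"
      have "{\<omega> \<in> space P. C * lam n \<omega> ^ (k + 1) < norm (theta_k theta k gam dl beta0 (lam n \<omega>) - theta beta0 0)}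
         \<subseteq> {\<omega>\<in>space P. norm (lam n \<omega>) > \<epsilon>0 * 1}"
      proof safe
        fix \<omega> assume \<omega>: "\<omega> \<in> space P" and gt: "C * lam n \<omega> ^ (k + 1) < norm (theta_k theta k gam dl beta0 (lam n \<omega>) - theta beta0 0)"
        show "\<epsilon>0 * 1 < norm (lam n \<omega>)"
        proof (rule ccontr)
          assume "\<not> \<epsilon>0 * 1 < norm (lam n \<omega>)"
          then have "lam n \<omega> \<in> {0..\<epsilon>0}" using \<omega> lam01 by auto
          then have "norm (theta_k theta k gam dl beta0 (lam n \<omega>) - theta beta0 0) \<le> C * lam n \<omega> ^ (k + 1)"
            using jk beta0B by blast
          then show False using gt by linarith
        qed
      qed
      then show "outer_prob P {\<omega> \<in> space P. C * lam n \<omega> ^ (k + 1) < norm (theta_k theta k gam dl beta0 (lam n \<omega>) - theta beta0 0)} < \<tau>"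
        using op_mono N nN by (meson le_less_trans)
    qed
  qed
  define J where "J = jacobian (\<lambda>b. theta b 0) (at beta0)"
  have "diff_k (Suc k0) (interior B) (\<lambda>b. theta b 0)" using R3 by auto
  then have "(\<lambda>b. theta b 0) differentiable (at beta0)" using R1(1) by simp
  then have hasd: "((\<lambda>b. theta b 0) has_derivative (\<lambda>h. J *v h)) (at beta0)"
    unfolding J_def by (simp add: jacobian_works)
  obtain r0 where r0: "r0 > 0" "ball beta0 r0 \<subseteq> B" using R1(1) mem_interior by blast
  define C' where "C' = max C 1"
  have C': "C' > 0" "C \<le> C'" unfolding C'_def by auto
  have part3: "small_op P (\<lambda>n \<omega>.
            sqrt (real n) *\<^sub>R (thetabar_k M thetahat k gam dl n (beta0 + (1 / sqrt (real n)) *\<^sub>R deltan n \<omega>) (lam n \<omega>) \<omega>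
                              - thetabar_k M thetahat k gam dl n beta0 (lam n \<omega>) \<omega>)
            - J *v deltan n \<omega>)
          (\<lambda>n \<omega>. 1 + norm (deltan n \<omega>))"
    unfolding small_op_def
  proof (intro allI impI vanish_lim)
    fix \<epsilon> :: real assume ep: "\<epsilon> > 0"
    show "vanish P (\<lambda>n. {\<omega> \<in> space P. \<epsilon> * (1 + norm (deltan n \<omega>)) < norm (sqrt (real n) *\<^sub>R (thetabar_k M thetahat k gam dl n (beta0 + (1 / sqrt (real n)) *\<^sub>R deltan n \<omega>) (lam n \<omega>) \<omega>
                              - thetabar_k M thetahat k gam dl n beta0 (lam n \<omega>) \<omega>) - J *v deltan n \<omega>)})"
      unfolding vanish_def
    proof (intro allI impI)
      fix \<tau> :: real assume \<tau>: "\<tau> > 0"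
      obtain \<eta> N1 where \<eta>: "\<eta> > 0" and N1: "\<forall>n\<ge>N1. outer_prob P {\<omega>\<in>space P. modF M S \<eta> (Fn n \<omega>) > \<epsilon> / (4 * \<Gamma>)} < \<tau> / 2"
        using W.equi[of "\<epsilon> / (4 * \<Gamma>)" "\<tau> / 2"] ep \<tau> \<Gamma>(1) by auto
      obtain d where d: "d > 0" and dd: "\<forall>y. norm (y - beta0) < d \<longrightarrow>
          norm (theta y 0 - theta beta0 0 - J *v (y - beta0)) \<le> \<epsilon> / 8 * norm (y - beta0)"
        using hasd ep unfolding has_derivative_at_alt by (meson zero_less_divide_iff zero_less_numeral)
      define \<rho> where "\<rho> = min (min \<eta> r0) d / 2"
      have \<rho>: "\<rho> > 0" "\<rho> < \<eta>" "\<rho> < r0" "\<rho> < d" unfolding \<rho>_def using \<eta> r0 d by auto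
      define G where "G n = {\<omega>\<in>space P. norm (deltan n \<omega>) > \<rho> * sqrt (real n)}
         \<union> {\<omega>\<in>space P. norm (lam n \<omega>) > \<epsilon>0 * 1}
         \<union> {\<omega>\<in>space P. norm (sqrt (real n) * lam n \<omega> ^ (k + 1)) > \<epsilon> / (4 * C') * 1}" for n
      have "vanish P G" unfolding G_def
        by (intro vanish_Un farvan lamvan remvan) (use \<rho> e0 ep C' in auto)
      moreover have "\<tau> / 2 > 0" using \<tau> by simp
      ultimately obtain N2 where N2: "\<forall>n\<ge>N2. outer_prob P (G n) < \<tau> / 2" unfolding vanish_def by blast
      show "\<exists>N. \<forall>n\<ge>N. outer_prob P {\<omega> \<in> space P. \<epsilon> * (1 + norm (deltan n \<omega>)) < norm (sqrt (real n) *\<^sub>R (thetabar_k M thetahat k gam dl n (beta0 + (1 / sqrt (real n)) *\<^sub>R deltan n \<omega>) (lam n \<omega>) \<omega>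
                              - thetabar_k M thetahat k gam dl n beta0 (lam n \<omega>) \<omega>) - J *v deltan n \<omega>)} < \<tau>"
      proof (intro exI[of _ "max (max N1 N2) 1"] allI impI)
        fix n assume nN: "max (max N1 N2) 1 \<le> n"
        then have n1: "n \<ge> 1" and nN1: "n \<ge> N1" and nN2: "n \<ge> N2" by auto
        have sn: "sqrt (real n) > 0" using n1 by simp
        let ?T = "{\<omega> \<in> space P. \<epsilon> * (1 + norm (deltan n \<omega>)) < norm (sqrt (real n) *\<^sub>R (thetabar_k M thetahat k gam dl n (beta0 + (1 / sqrt (real n)) *\<^sub>R deltan n \<omega>) (lam n \<omega>) \<omega>
                              - thetabar_k M thetahat k gam dl n beta0 (lam n \<omega>) \<omega>) - J *v deltan n \<omega>)}"
        let ?Md = "{\<omega>\<in>space P. modF M S \<eta> (Fn n \<omega>) > \<epsilon> / (4 * \<Gamma>)}"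
        have sub: "?T \<subseteq> G n \<union> ?Md"
        proof
          fix \<omega> assume T: "\<omega> \<in> ?T"
          show "\<omega> \<in> G n \<union> ?Md"
          proof (rule ccontr)
            assume "\<omega> \<notin> G n \<union> ?Md"
            then have \<omega>: "\<omega> \<in> space P" and f1: "norm (deltan n \<omega>) \<le> \<rho> * sqrt (real n)"
              and f2: "norm (lam n \<omega>) \<le> \<epsilon>0" and f3: "norm (sqrt (real n) * lam n \<omega> ^ (k + 1)) \<le> \<epsilon> / (4 * C')"
              and f4: "modF M S \<eta> (Fn n \<omega>) \<le> \<epsilon> / (4 * \<Gamma>)"
              using T unfolding G_def by auto
            define l where "l = lam n \<omega>"
            define \<delta> where "\<delta> = deltan n \<omega>"
            define hv where "hv = (1 / sqrt (real n)) *\<^sub>R \<delta>"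
            define bn where "bn = beta0 + hv"
            have l: "l \<in> {0..\<epsilon>0}" "l \<in> {0..1}" using f2 lam01 \<omega> e0 unfolding l_def by auto
            have nhv: "norm hv = norm \<delta> / sqrt (real n)" unfolding hv_def using sn by simp
            have hvr: "norm hv \<le> \<rho>" unfolding nhv using f1 sn unfolding \<delta>_def by (simp add: divide_le_eq)
            have dsh: "\<delta> = sqrt (real n) *\<^sub>R hv" unfolding hv_def using sn by simp
            have bnB: "bn \<in> B" using r0 hvr \<rho> unfolding bn_def by (auto simp: dist_norm)
            have inD: "Fn n \<omega> \<in> bdd_paths M S" using W.inD(1) \<omega> by blast
            let ?A = "(\<Sum>r\<le>k. gam r *\<^sub>R ((1/real M) *\<^sub>R (\<Sum>m\<in>{1..M}. (sqrt (real n) *\<^sub>R (thetahat m n bn (dl^r*l) \<omega> - theta bn (dl^r*l))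
                - sqrt (real n) *\<^sub>R (thetahat m n beta0 (dl^r*l) \<omega> - theta beta0 (dl^r*l))))))"
            let ?D1 = "sqrt (real n) *\<^sub>R (theta_k theta k gam dl bn l - theta bn 0)"
            let ?D2 = "sqrt (real n) *\<^sub>R (theta_k theta k gam dl beta0 l - theta beta0 0)"
            let ?E = "sqrt (real n) *\<^sub>R (theta bn 0 - theta beta0 0) - J *v \<delta>"
            have id: "sqrt (real n) *\<^sub>R (thetabar_k M thetahat k gam dl n bn l \<omega> - thetabar_k M thetahat k gam dl n beta0 l \<omega>) - J *v \<delta>
               = ?A + ?D1 - ?D2 + ?E" by (rule ident[OF M])
            have nA: "norm ?A \<le> \<epsilon> / 4"
            proof -
              have "norm ?A \<le> (\<Sum>r\<le>k. \<bar>gam r\<bar>) * (\<epsilon> / (4 * \<Gamma>))"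
              proof (rule gam_norm, rule avg_norm[OF M])
                fix r m assume r: "r \<le> k" and m: "m \<in> {1..M}"
                have c: "dl ^ r * l \<in> {0..1}" using cS l(2) by blast
                have "norm (sqrt (real n) *\<^sub>R (thetahat m n bn (dl^r*l) \<omega> - theta bn (dl^r*l))
                  - sqrt (real n) *\<^sub>R (thetahat m n beta0 (dl^r*l) \<omega> - theta beta0 (dl^r*l)))
                  = norm (Fn n \<omega> m (bn, dl^r*l) - Fn n \<omega> m (beta0, dl^r*l))"
                  unfolding Fn_def psin_m[OF m] by simp
                also have "\<dots> \<le> modF M S \<eta> (Fn n \<omega>)"
                proof (rule modF_upper[OF inD])
                  show "m \<le> M" using m by simp
                  show "(bn, dl ^ r * l) \<in> S" "(beta0, dl ^ r * l) \<in> S" using bnB beta0B c unfolding S_def by auto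
                  have "dist bn beta0 = norm hv" unfolding bn_def by (simp add: dist_norm)
                  then show "dist (bn, dl ^ r * l) (beta0, dl ^ r * l) < \<eta>" using hvr \<rho> by (simp add: dist_Pair_Pair)
                qed
                also have "\<dots> \<le> \<epsilon> / (4 * \<Gamma>)" by (rule f4)
                finally show "norm (sqrt (real n) *\<^sub>R (thetahat m n bn (dl^r*l) \<omega> - theta bn (dl^r*l))
                  - sqrt (real n) *\<^sub>R (thetahat m n beta0 (dl^r*l) \<omega> - theta beta0 (dl^r*l))) \<le> \<epsilon> / (4 * \<Gamma>)" .
              qed
              also have "\<dots> \<le> \<Gamma> * (\<epsilon> / (4 * \<Gamma>))" using \<Gamma> ep by (intro mult_right_mono) auto
              also have "\<dots> = \<epsilon> / 4" using \<Gamma>(1) by simp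
              finally show ?thesis .
            qed
            have nD: "norm (sqrt (real n) *\<^sub>R (theta_k theta k gam dl b l - theta b 0)) \<le> \<epsilon> / 4" if b: "b \<in> B" for b
            proof -
              have lk: "0 \<le> l ^ (k + 1)" using l by simp
              have "norm (sqrt (real n) *\<^sub>R (theta_k theta k gam dl b l - theta b 0)) = sqrt (real n) * norm (theta_k theta k gam dl b l - theta b 0)"
                using sn by simp
              also have "\<dots> \<le> sqrt (real n) * (C * l ^ (k + 1))" using jk b l(1) sn by (intro mult_left_mono) auto
              also have "\<dots> \<le> sqrt (real n) * (C' * l ^ (k + 1))" using C' lk sn by (intro mult_left_mono mult_right_mono) auto
              also have "\<dots> = C' * (sqrt (real n) * l ^ (k + 1))" by simp
              also have "\<dots> \<le> C' * (\<epsilon> / (4 * C'))" using f3 C' unfolding l_def by (intro mult_left_mono) auto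
              also have "\<dots> = \<epsilon> / 4" using C' by simp
              finally show ?thesis .
            qed
            have nE: "norm ?E \<le> \<epsilon> / 8 * norm \<delta>"
            proof -
              have "?E = sqrt (real n) *\<^sub>R (theta bn 0 - theta beta0 0 - J *v (bn - beta0))"
                unfolding dsh bn_def by (simp add: matrix_vector_mult_scaleR scaleR_diff_right)
              then have "norm ?E = sqrt (real n) * norm (theta bn 0 - theta beta0 0 - J *v (bn - beta0))"
                using sn by simp
              also have "\<dots> \<le> sqrt (real n) * (\<epsilon> / 8 * norm (bn - beta0))"
              proof -
                have "norm (bn - beta0) < d" using hvr \<rho> unfolding bn_def by simp
                then have "norm (theta bn 0 - theta beta0 0 - J *v (bn - beta0)) \<le> \<epsilon> / 8 * norm (bn - beta0)"
                  using dd by blast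
                then show ?thesis using sn by (intro mult_left_mono) auto
              qed
              also have "\<dots> = \<epsilon> / 8 * norm \<delta>" unfolding bn_def dsh using sn by simp
              finally show ?thesis .
            qed
            have "norm (?A + ?D1 - ?D2 + ?E) \<le> norm ?A + norm ?D1 + norm ?D2 + norm ?E"
              by (smt (verit) norm_triangle_ineq norm_triangle_ineq4)
            also have "\<dots> \<le> \<epsilon> / 4 + \<epsilon> / 4 + \<epsilon> / 4 + \<epsilon> / 8 * norm \<delta>"
              using nA nD[OF bnB] nD[OF beta0B] nE by linarith
            also have "\<dots> \<le> \<epsilon> * (1 + norm \<delta>)"
            proof -
              have "0 \<le> \<epsilon> * norm \<delta>" using ep by simp
              moreover have "\<epsilon> / 8 * norm \<delta> = (\<epsilon> * norm \<delta>) / 8" by simp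
              moreover have "\<epsilon> * (1 + norm \<delta>) = \<epsilon> + \<epsilon> * norm \<delta>" by (simp add: algebra_simps)
              ultimately show ?thesis using ep by linarith
            qed
            finally have "norm (sqrt (real n) *\<^sub>R (thetabar_k M thetahat k gam dl n bn l \<omega> - thetabar_k M thetahat k gam dl n beta0 l \<omega>) - J *v \<delta>)
               \<le> \<epsilon> * (1 + norm \<delta>)" unfolding id .
            then show False using T unfolding bn_def hv_def \<delta>_def l_def by auto
          qed
        qed
        have "outer_prob P ?T \<le> outer_prob P (G n \<union> ?Md)" using sub by (rule op_mono)
        also have "\<dots> \<le> outer_prob P (G n) + outer_prob P ?Md" by (rule op_union)
        also have "\<dots> < \<tau> / 2 + \<tau> / 2" using N1 N2 nN1 nN2 by (intro add_strict_mono) auto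
        finally show "outer_prob P ?T < \<tau>" by simp
      qed
    qed
  qed
  show ?thesis unfolding J_def[symmetric] using part1 part2 part3 by (intro conjI)
qed


end
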